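(* Let $R$ be a local ring with regular maximal ideal. The following are equivalent: (1) $R$ is a quadratic ring such that $R_\infty$ has exactly three maximal ideals. (2) There is a ring $S$ with $R\subseteq S\subseteq Q(R)$ such that (i) $S$ has exactly three maximal ideals, (ii) each maximal ideal of $S$ is principal and regular with residue field isomorphic to $\mathbb{F}_2$, and (iii) $R=k+\operatorname{Jac} S$, where $k$ is the prime subring of $R$.
   Context: All rings are commutative with identity; a local ring is a ring with a unique maximal ideal (not necessarily Noetherian). $Q(R)$ is the total ring of quotients, $\operatorname{Jac} R$ the Jacobson radical. An ideal is regular if it contains a nonzerodivisor. For a regular fractional ideal $I$ (an $R$-submodule of $Q(R)$ containing a nonzerodivisor with $bI\subseteq R$ for some nonzerodivisor $b\in R$), $E(I)=\{q\in Q(R):qI\subseteq I\}$, and $I$ is stable if it is projective as an $E(I)$-module. An extension $R\subseteq S$ is quadratic if $xy\in xR+yR+R$ for all $x,y\in S$. If $\operatorname{Jac} R$ is regular, define $R_0=R$, $R_i=E(\operatorname{Jac} R_{i-1})$ for $i\ge1$, and $R_\infty=\bigcup_{i\ge1}R_i$. $R$ is a quadratic ring if $R$ is local, its maximal ideal is regular and stable, and $R\subseteq R_\infty$ is a quadratic extension. *)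

theory Defs
  imports Main
begin

text \<open>Convention: all rings considered are subsets of an ambient commutative ring
  of type 'a, which plays the role of the total ring of quotients Q(R) of the
  base ring R (see is_total_quotient_ring).\<close>

definition is_subring :: "'a::comm_ring_1 set \<Rightarrow> bool" where
  "is_subring S \<longleftrightarrow> 0 \<in> S \<and> 1 \<in> S \<and>
     (\<forall>x\<in>S. \<forall>y\<in>S. x + y \<in> S \<and> x - y \<in> S \<and> x * y \<in> S)"

definition nonzerodivisor_in :: "'a::comm_ring_1 set \<Rightarrow> 'a \<Rightarrow> bool" where
  "nonzerodivisor_in S b \<longleftrightarrow> b \<in> S \<and> (\<forall>y\<in>S. b * y = 0 \<longrightarrow> y = 0)"

text \<open>This determines Q(R) up to isomorphism.\<close>
definition is_total_quotient_ring :: "'a::comm_ring_1 set \<Rightarrow> bool" where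
  "is_total_quotient_ring R \<longleftrightarrow> is_subring R \<and>
     (\<forall>b. nonzerodivisor_in R b \<longrightarrow> (\<exists>c. b * c = 1)) \<and>
     (\<forall>q. \<exists>r\<in>R. \<exists>b. nonzerodivisor_in R b \<and> q * b = r)"

definition ideal_in :: "'a::comm_ring_1 set \<Rightarrow> 'a set \<Rightarrow> bool" where
  "ideal_in S I \<longleftrightarrow> I \<subseteq> S \<and> 0 \<in> I \<and>
     (\<forall>x\<in>I. \<forall>y\<in>I. x + y \<in> I \<and> x - y \<in> I) \<and> (\<forall>s\<in>S. \<forall>x\<in>I. s * x \<in> I)"

definition maximal_ideal_in :: "'a::comm_ring_1 set \<Rightarrow> 'a set \<Rightarrow> bool" where
  "maximal_ideal_in S M \<longleftrightarrow> ideal_in S M \<and> M \<noteq> S \<and>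
     (\<forall>J. ideal_in S J \<and> M \<subseteq> J \<longrightarrow> J = M \<or> J = S)"

definition local_ring :: "'a::comm_ring_1 set \<Rightarrow> bool" where
  "local_ring S \<longleftrightarrow> is_subring S \<and> (\<exists>!M. maximal_ideal_in S M)"

definition Jac :: "'a::comm_ring_1 set \<Rightarrow> 'a set" where
  "Jac S = \<Inter>{M. maximal_ideal_in S M}"

definition regular_ideal_in :: "'a::comm_ring_1 set \<Rightarrow> 'a set \<Rightarrow> bool" where
  "regular_ideal_in S I \<longleftrightarrow> ideal_in S I \<and> (\<exists>b\<in>I. nonzerodivisor_in S b)"

definition principal_ideal_in :: "'a::comm_ring_1 set \<Rightarrow> 'a set \<Rightarrow> bool" where
  "principal_ideal_in S I \<longleftrightarrow> (\<exists>m\<in>S. I = {s * m | s. s \<in> S})"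

definition residue_ring :: "'a::comm_ring_1 set \<Rightarrow> 'a set \<Rightarrow> 'a set set" where
  "residue_ring S M = (\<lambda>x. (\<lambda>m. x + m) ` M) ` S"

definition Endo :: "'a::comm_ring_1 set \<Rightarrow> 'a set" where
  "Endo I = {q. \<forall>x\<in>I. q * x \<in> I}"

text \<open>Projectivity of an E-submodule I of Q(R): I is a direct summand of a free
  E-module, expressed as: the canonical surjection from the free module E^(I)
  (finitely supported coordinate functions on the generating set I) onto I has an
  E-linear section f (f x is the coordinate vector of x).\<close>
definition projective_over :: "'a::comm_ring_1 set \<Rightarrow> 'a set \<Rightarrow> bool" where
  "projective_over E I \<longleftrightarrow> (\<forall>e\<in>E. \<forall>x\<in>I. e * x \<in> I) \<and>
     (\<exists>f :: 'a \<Rightarrow> 'a \<Rightarrow> 'a.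
        (\<forall>x\<in>I. \<forall>y\<in>I. f x y \<in> E) \<and>
        (\<forall>x\<in>I. finite {y\<in>I. f x y \<noteq> 0}) \<and>
        (\<forall>x\<in>I. x = (\<Sum>y\<in>{y\<in>I. f x y \<noteq> 0}. f x y * y)) \<and>
        (\<forall>x1\<in>I. \<forall>x2\<in>I. \<forall>y\<in>I. f (x1 + x2) y = f x1 y + f x2 y) \<and>
        (\<forall>e\<in>E. \<forall>x\<in>I. \<forall>y\<in>I. f (e * x) y = e * f x y))"

definition stable :: "'a::comm_ring_1 set \<Rightarrow> bool" where
  "stable I \<longleftrightarrow> projective_over (Endo I) I"

primrec Rseq :: "'a::comm_ring_1 set \<Rightarrow> nat \<Rightarrow> 'a set" where
  "Rseq R 0 = R"
| "Rseq R (Suc i) = Endo (Jac (Rseq R i))"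

definition Rinf :: "'a::comm_ring_1 set \<Rightarrow> 'a set" where
  "Rinf R = (\<Union>i\<in>{1..}. Rseq R i)"

definition quadratic_ext :: "'a::comm_ring_1 set \<Rightarrow> 'a set \<Rightarrow> bool" where
  "quadratic_ext R S \<longleftrightarrow> R \<subseteq> S \<and>
     (\<forall>x\<in>S. \<forall>y\<in>S. \<exists>a\<in>R. \<exists>b\<in>R. \<exists>c\<in>R. x * y = a * x + b * y + c)"

definition quadratic_ring :: "'a::comm_ring_1 set \<Rightarrow> bool" where
  "quadratic_ring R \<longleftrightarrow> local_ring R \<and> regular_ideal_in R (Jac R) \<and>
     stable (Jac R) \<and> quadratic_ext R (Rinf R)"

text \<open>Prime subring of the ambient ring (= prime subring of R, as R contains 1).\<close>
definition prime_subring :: "'a::comm_ring_1 set" where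
  "prime_subring = range of_int"

end

theory Submission
  imports Defs
begin


locale subr =
  fixes S :: "'a::comm_ring_1 set"
  assumes sr: "is_subring S"
begin
lemma zero[simp]: "0 \<in> S" and one[simp]: "1 \<in> S"
  using sr by (auto simp: is_subring_def)
lemma add[simp]: "x \<in> S \<Longrightarrow> y \<in> S \<Longrightarrow> x + y \<in> S"
  and diff[simp]: "x \<in> S \<Longrightarrow> y \<in> S \<Longrightarrow> x - y \<in> S"
  and mult[simp]: "x \<in> S \<Longrightarrow> y \<in> S \<Longrightarrow> x * y \<in> S"
  using sr by (auto simp: is_subring_def)
lemma uminus[simp]: "x \<in> S \<Longrightarrow> - x \<in> S"
  using diff[OF zero, of x] by simp
lemma power[simp]: "x \<in> S \<Longrightarrow> x ^ n \<in> S"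
  by (induction n) auto
lemma of_nat[simp]: "of_nat n \<in> S"
  by (induction n) auto
lemma of_int[simp]: "of_int k \<in> S"
proof (cases k rule: int_cases)
  case (nonneg n) then show ?thesis by simp
next
  case (neg n) then show ?thesis using uminus[OF of_nat[of "Suc n"]] by simp
qed
lemma numeral[simp]: "numeral n \<in> S"
  using of_nat[of "numeral n"] by simp
lemma sum[simp]: "(\<And>a. a \<in> A \<Longrightarrow> f a \<in> S) \<Longrightarrow> sum f A \<in> S"
  by (induction A rule: infinite_finite_induct) auto
end

lemma idealD:
  assumes "ideal_in S I"
  shows "I \<subseteq> S" "0 \<in> I" "x \<in> I \<Longrightarrow> y \<in> I \<Longrightarrow> x + y \<in> I"
    "x \<in> I \<Longrightarrow> y \<in> I \<Longrightarrow> x - y \<in> I"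
    "s \<in> S \<Longrightarrow> x \<in> I \<Longrightarrow> s * x \<in> I"
    "s \<in> S \<Longrightarrow> x \<in> I \<Longrightarrow> x * s \<in> I"
  using assms by (auto simp: ideal_in_def mult.commute)

locale idl = subr +
  fixes I
  assumes idl: "ideal_in S I"
begin
lemma sub: "x \<in> I \<Longrightarrow> x \<in> S" using idealD(1)[OF idl] by auto
lemma izero[simp]: "0 \<in> I" using idealD(2)[OF idl] .
lemma iadd[simp]: "x \<in> I \<Longrightarrow> y \<in> I \<Longrightarrow> x + y \<in> I" using idealD(3)[OF idl] .
lemma idiff[simp]: "x \<in> I \<Longrightarrow> y \<in> I \<Longrightarrow> x - y \<in> I" using idealD(4)[OF idl] .
lemma imultl[simp]: "s \<in> S \<Longrightarrow> x \<in> I \<Longrightarrow> s * x \<in> I" using idealD(5)[OF idl] .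
lemma imultr[simp]: "s \<in> S \<Longrightarrow> x \<in> I \<Longrightarrow> x * s \<in> I" using idealD(6)[OF idl] .
lemma iuminus[simp]: "x \<in> I \<Longrightarrow> - x \<in> I" using idiff[OF izero, of x] by simp
lemma isum[simp]: "(\<And>a. a \<in> A \<Longrightarrow> f a \<in> I) \<Longrightarrow> sum f A \<in> I"
  by (induction A rule: infinite_finite_induct) auto
lemma one_iff: "1 \<in> I \<longleftrightarrow> I = S"
proof
  assume "1 \<in> I"
  then have "s \<in> I" if "s \<in> S" for s using imultr[OF that \<open>1 \<in> I\<close>] by simp
  then show "I = S" using sub by auto
qed auto
end

lemma maximal_ideal_in_ideal: "maximal_ideal_in S M \<Longrightarrow> ideal_in S M"
  by (simp add: maximal_ideal_in_def)

lemma maximal_one: assumes "is_subring S" "maximal_ideal_in S M" shows "1 \<notin> M"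
proof -
  interpret idl S M using assms by (unfold_locales, auto simp: maximal_ideal_in_def)
  show ?thesis using one_iff assms(2) by (auto simp: maximal_ideal_in_def)
qed


lemma ideal_inI:
  assumes "I \<subseteq> S" "0 \<in> I" "\<And>x y. x \<in> I \<Longrightarrow> y \<in> I \<Longrightarrow> x + y \<in> I"
    "\<And>x y. x \<in> I \<Longrightarrow> y \<in> I \<Longrightarrow> x - y \<in> I"
    "\<And>s x. s \<in> S \<Longrightarrow> x \<in> I \<Longrightarrow> s * x \<in> I"
  shows "ideal_in S I"
  using assms by (auto simp: ideal_in_def)

lemma ideal_chain_union:
  assumes C: "C \<in> chains {J. ideal_in S J \<and> I \<subseteq> J \<and> 1 \<notin> J}" and ne: "C \<noteq> {}"
  shows "\<Union>C \<in> {J. ideal_in S J \<and> I \<subseteq> J \<and> 1 \<notin> J}"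
proof -
  have sub: "C \<subseteq> {J. ideal_in S J \<and> I \<subseteq> J \<and> 1 \<notin> J}" using chainsD2[OF C] .
  have ch: "\<And>A B. A \<in> C \<Longrightarrow> B \<in> C \<Longrightarrow> A \<subseteq> B \<or> B \<subseteq> A" using chainsD[OF C] by blast
  obtain A0 where A0: "A0 \<in> C" using ne by auto
  have up: "\<exists>D\<in>C. x \<in> D \<and> y \<in> D" if xy: "x \<in> \<Union>C" "y \<in> \<Union>C" for x y
  proof -
    obtain A B where AB: "A \<in> C" "B \<in> C" "x \<in> A" "y \<in> B" using xy by auto
    show ?thesis using ch[OF AB(1,2)] AB by blast
  qed
  have "ideal_in S (\<Union>C)"
  proof (rule ideal_inI)
    show "\<Union>C \<subseteq> S" using sub by (auto simp: ideal_in_def)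
    show "0 \<in> \<Union>C" using A0 sub by (auto simp: ideal_in_def)
    fix x y assume "x \<in> \<Union>C" "y \<in> \<Union>C"
    then obtain D where "D \<in> C" "x \<in> D" "y \<in> D" using up by blast
    moreover have "ideal_in S D" using \<open>D \<in> C\<close> sub by auto
    ultimately show "x + y \<in> \<Union>C" "x - y \<in> \<Union>C" by (auto simp: ideal_in_def)
  next
    fix s x assume "s \<in> S" "x \<in> \<Union>C"
    then obtain D where "D \<in> C" "x \<in> D" by auto
    moreover have "ideal_in S D" using \<open>D \<in> C\<close> sub by auto
    ultimately have "s * x \<in> D" using \<open>s \<in> S\<close> by (auto simp: ideal_in_def)
    then show "s * x \<in> \<Union>C" using \<open>D \<in> C\<close> by blast
  qed
  then show ?thesis using sub A0 by auto
qed

lemma exists_maximal_ideal: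
  assumes S: "is_subring S" and I: "ideal_in S I" and one: "1 \<notin> I"
  shows "\<exists>P. maximal_ideal_in S P \<and> I \<subseteq> P"
proof -
  let ?A = "{J. ideal_in S J \<and> I \<subseteq> J \<and> 1 \<notin> J}"
  have "\<forall>C\<in>chains ?A. \<exists>U\<in>?A. \<forall>X\<in>C. X \<subseteq> U"
  proof
    fix C assume C: "C \<in> chains ?A"
    show "\<exists>U\<in>?A. \<forall>X\<in>C. X \<subseteq> U"
    proof (cases "C = {}")
      case True then show ?thesis using I one by auto
    next
      case False then show ?thesis using ideal_chain_union[OF C False] by blast
    qed
  qed
  from Zorn_Lemma2[OF this] obtain P where P: "P \<in> ?A" "\<forall>X\<in>?A. P \<subseteq> X \<longrightarrow> X = P" by blast
  interpret subr S using S by unfold_locales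
  have "maximal_ideal_in S P"
    unfolding maximal_ideal_in_def
  proof (intro conjI allI impI)
    show "ideal_in S P" using P by auto
    show "P \<noteq> S" using P by auto
    fix J assume J: "ideal_in S J \<and> P \<subseteq> J"
    show "J = P \<or> J = S"
    proof (cases "1 \<in> J")
      case True
      interpret idl S J using J by unfold_locales auto
      show ?thesis using True one_iff by auto
    next
      case False then show ?thesis using P J by auto
    qed
  qed
  then show ?thesis using P by auto
qed

lemma unit_lemma:
  assumes S: "is_subring S" and x: "x \<in> S" and nm: "\<And>P. maximal_ideal_in S P \<Longrightarrow> x \<notin> P"
  shows "\<exists>y\<in>S. x * y = 1"
proof (rule ccontr)
  assume no: "\<not> ?thesis"
  interpret subr S using S by unfold_locales
  let ?I = "{s * x | s. s \<in> S}"
  have I: "ideal_in S ?I"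
  proof (rule ideal_inI)
    show "?I \<subseteq> S" using x by auto
    show "0 \<in> ?I" by (auto intro!: exI[of _ 0])
    fix a b assume "a \<in> ?I" "b \<in> ?I"
    then obtain s t where st: "s \<in> S" "t \<in> S" "a = s * x" "b = t * x" by auto
    have "a + b = (s + t) * x" "a - b = (s - t) * x" using st by (auto simp: algebra_simps)
    moreover have "s + t \<in> S" "s - t \<in> S" using st by auto
    ultimately show "a + b \<in> ?I" "a - b \<in> ?I" by blast+
  next
    fix s a assume "s \<in> S" "a \<in> ?I"
    then obtain t where "t \<in> S" "a = t * x" by auto
    then show "s * a \<in> ?I" using \<open>s \<in> S\<close> by (auto intro!: exI[of _ "s * t"] simp: mult.assoc)
  qed
  have "1 \<notin> ?I" using no by (auto simp: mult.commute)
  from exists_maximal_ideal[OF S I this] obtain P where "maximal_ideal_in S P" "?I \<subseteq> P" by blast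
  moreover have "x \<in> ?I" by (auto intro!: exI[of _ 1])
  ultimately show False using nm by auto
qed

lemma local_unit:
  assumes L: "local_ring R" and M: "maximal_ideal_in R M" and x: "x \<in> R" "x \<notin> M"
  shows "\<exists>y\<in>R. x * y = 1"
proof (rule unit_lemma)
  show "is_subring R" using L by (simp add: local_ring_def)
  show "x \<in> R" by fact
  fix P assume "maximal_ideal_in R P"
  then have "P = M" using L M by (auto simp: local_ring_def)
  then show "x \<notin> P" using x by simp
qed

lemma local_Jac:
  assumes L: "local_ring R" and M: "maximal_ideal_in R M"
  shows "Jac R = M"
proof -
  have "{P. maximal_ideal_in R P} = {M}" using L M by (auto simp: local_ring_def)
  then show ?thesis by (simp add: Jac_def)
qed

lemma Jac_props:
  shows "0 \<in> Jac A" "x \<in> Jac A \<Longrightarrow> y \<in> Jac A \<Longrightarrow> x + y \<in> Jac A"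
    "x \<in> Jac A \<Longrightarrow> y \<in> Jac A \<Longrightarrow> x - y \<in> Jac A"
  unfolding Jac_def by (auto simp: maximal_ideal_in_def ideal_in_def)

lemma Endo_subring:
  assumes "0 \<in> I" "\<And>x y. x \<in> I \<Longrightarrow> y \<in> I \<Longrightarrow> x + y \<in> I" "\<And>x y. x \<in> I \<Longrightarrow> y \<in> I \<Longrightarrow> x - y \<in> I"
  shows "is_subring (Endo I)"
  using assms unfolding is_subring_def Endo_def by (auto simp: algebra_simps)

lemma Endo_Jac_subring: "is_subring (Endo (Jac A))"
  by (rule Endo_subring) (auto intro: Jac_props)

lemma subring_Endo_Jac: assumes "is_subring A" shows "A \<subseteq> Endo (Jac A)"
proof
  fix a assume a: "a \<in> A"
  show "a \<in> Endo (Jac A)" unfolding Endo_def Jac_def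
  proof (intro CollectI ballI InterI)
    fix x P assume "x \<in> \<Inter>{M. maximal_ideal_in A M}" "P \<in> {M. maximal_ideal_in A M}"
    then have "x \<in> P" "ideal_in A P" by (auto simp: maximal_ideal_in_def)
    then show "a * x \<in> P" using a by (auto simp: ideal_in_def)
  qed
qed

lemma Rseq_subring: "is_subring R \<Longrightarrow> is_subring (Rseq R i)"
  by (cases i) (auto intro: Endo_Jac_subring)

lemma Rseq_mono_Suc: "is_subring R \<Longrightarrow> Rseq R i \<subseteq> Rseq R (Suc i)"
  using subring_Endo_Jac[OF Rseq_subring] by simp

lemma Rseq_mono: "is_subring R \<Longrightarrow> i \<le> j \<Longrightarrow> Rseq R i \<subseteq> Rseq R j"
proof (induction j)
  case 0 then show ?case by simp
next
  case (Suc j) then show ?case using Rseq_mono_Suc[of R j] by (auto simp: le_Suc_eq)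
qed

lemma Rinf_subring:
  assumes R: "is_subring R" shows "is_subring (Rinf R)"
proof -
  have key: "\<exists>k\<ge>1. x \<in> Rseq R k \<and> y \<in> Rseq R k" if xy: "x \<in> Rinf R" "y \<in> Rinf R" for x y
  proof -
    obtain i j where "i \<ge> 1" "j \<ge> 1" "x \<in> Rseq R i" "y \<in> Rseq R j" using xy unfolding Rinf_def by blast
    then show ?thesis using Rseq_mono[OF R, of i "max i j"] Rseq_mono[OF R, of j "max i j"]
      by (intro exI[of _ "max i j"]) auto
  qed
  have z: "0 \<in> Rinf R" "1 \<in> Rinf R"
    using Rseq_subring[OF R, of 1] by (auto simp: Rinf_def is_subring_def intro!: bexI[of _ 1])
  have cl: "x + y \<in> Rinf R \<and> x - y \<in> Rinf R \<and> x * y \<in> Rinf R" if xy: "x \<in> Rinf R" "y \<in> Rinf R" for x y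
  proof -
    from xy obtain k where k: "k \<ge> 1" "x \<in> Rseq R k" "y \<in> Rseq R k" using key by blast
    interpret subr "Rseq R k" using Rseq_subring[OF R] by unfold_locales
    have "x + y \<in> Rseq R k" "x - y \<in> Rseq R k" "x * y \<in> Rseq R k" using k by auto
    then show "x + y \<in> Rinf R \<and> x - y \<in> Rinf R \<and> x * y \<in> Rinf R"
      using k(1) unfolding Rinf_def by blast
  qed
  show ?thesis unfolding is_subring_def using z cl by blast
qed

lemma R_sub_Rseq: "is_subring R \<Longrightarrow> R \<subseteq> Rseq R i"
  using Rseq_mono[of R 0 i] by simp

lemma R_sub_Rinf: "is_subring R \<Longrightarrow> R \<subseteq> Rinf R"
  using R_sub_Rseq[of R 1] unfolding Rinf_def by force

lemma Rinf_const:
  assumes "\<And>i. i \<ge> 1 \<Longrightarrow> Rseq R i = S"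
  shows "Rinf R = S"
  using assms by (auto simp: Rinf_def)


lemma comax_ideal:
  assumes T: "is_subring T" and N: "ideal_in T N" and m: "m \<in> T"
  shows "ideal_in T {p + t * m | p t. p \<in> N \<and> t \<in> T}"
proof -
  interpret idl T N using T N by unfold_locales
  show ?thesis
  proof (rule ideal_inI)
    show "{p + t * m | p t. p \<in> N \<and> t \<in> T} \<subseteq> T" using m sub by auto
    show "0 \<in> {p + t * m | p t. p \<in> N \<and> t \<in> T}" by (auto intro!: exI[of _ 0])
  next
    fix x y assume "x \<in> {p + t * m | p t. p \<in> N \<and> t \<in> T}" "y \<in> {p + t * m | p t. p \<in> N \<and> t \<in> T}"
    then obtain p t p' t' where pt: "p \<in> N" "t \<in> T" "p' \<in> N" "t' \<in> T" "x = p + t * m" "y = p' + t' * m" by auto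
    have "x + y = (p + p') + (t + t') * m" "x - y = (p - p') + (t - t') * m" using pt by (simp_all add: algebra_simps)
    moreover have "p + p' \<in> N" "p - p' \<in> N" "t + t' \<in> T" "t - t' \<in> T" using pt by auto
    ultimately show "x + y \<in> {p + t * m | p t. p \<in> N \<and> t \<in> T}" "x - y \<in> {p + t * m | p t. p \<in> N \<and> t \<in> T}"
      by blast+
  next
    fix s x assume s: "s \<in> T" and "x \<in> {p + t * m | p t. p \<in> N \<and> t \<in> T}"
    then obtain p t where pt: "p \<in> N" "t \<in> T" "x = p + t * m" by auto
    have "s * x = s * p + (s * t) * m" using pt by (simp add: algebra_simps)
    moreover have "s * p \<in> N" "s * t \<in> T" using pt s by auto
    ultimately show "s * x \<in> {p + t * m | p t. p \<in> N \<and> t \<in> T}" by blast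
  qed
qed

lemma max_comax:
  assumes T: "is_subring T" and N: "maximal_ideal_in T N" and m: "m \<in> T" "m \<notin> N"
  shows "\<exists>p\<in>N. \<exists>t\<in>T. 1 = p + t * m"
proof -
  let ?K = "{p + t * m | p t. p \<in> N \<and> t \<in> T}"
  have N': "ideal_in T N" using N by (simp add: maximal_ideal_in_def)
  interpret idl T N using T N' by unfold_locales
  have K: "ideal_in T ?K" using comax_ideal[OF T N' m(1)] .
  have "N \<subseteq> ?K" by (auto, rule_tac x=x in exI, rule_tac x=0 in exI, simp)
  moreover have "m \<in> ?K" by (rule CollectI, rule exI[of _ 0], rule exI[of _ 1], simp)
  ultimately have "?K = T" using N K m(2) unfolding maximal_ideal_in_def by blast
  then have "1 \<in> ?K" by auto
  then show ?thesis by auto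
qed

lemma max_distinct:
  assumes T: "is_subring T" and A: "maximal_ideal_in T A" and B: "maximal_ideal_in T B" and ne: "A \<noteq> B"
  shows "\<exists>u\<in>T. u \<in> B \<and> u - 1 \<in> A"
proof -
  have "\<not> B \<subseteq> A"
  proof
    assume "B \<subseteq> A"
    then have "A = B \<or> A = T" using B A unfolding maximal_ideal_in_def by blast
    then show False using ne A by (auto simp: maximal_ideal_in_def)
  qed
  then obtain b where b: "b \<in> B" "b \<notin> A" by auto
  have bT: "b \<in> T" using b B by (auto simp: maximal_ideal_in_def ideal_in_def)
  obtain p t where pt: "p \<in> A" "t \<in> T" "1 = p + t * b" using max_comax[OF T A bT b(2)] by blast
  interpret idl T B using T B by unfold_locales (auto simp: maximal_ideal_in_def)
  interpret A: idl T A using T A by unfold_locales (auto simp: maximal_ideal_in_def)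
  have "t * b - 1 = - p" using pt by (simp add: algebra_simps)
  moreover have "t * b \<in> B" "t * b \<in> T" using pt b bT by auto
  ultimately show ?thesis using pt by (intro bexI[of _ "t * b"]) auto
qed

lemma max_three:
  assumes T: "is_subring T" and A: "maximal_ideal_in T A" and B: "maximal_ideal_in T B"
    and C: "maximal_ideal_in T C" and ne: "A \<noteq> B" "A \<noteq> C"
  shows "\<exists>e\<in>T. e \<in> B \<and> e \<in> C \<and> e - 1 \<in> A"
proof -
  obtain u where u: "u \<in> T" "u \<in> B" "u - 1 \<in> A" using max_distinct[OF T A B ne(1)] by blast
  obtain v where v: "v \<in> T" "v \<in> C" "v - 1 \<in> A" using max_distinct[OF T A C ne(2)] by blast
  interpret subr T using T by unfold_locales
  interpret A: idl T A using T A by unfold_locales (auto simp: maximal_ideal_in_def)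
  interpret B: idl T B using T B by unfold_locales (auto simp: maximal_ideal_in_def)
  interpret C: idl T C using T C by unfold_locales (auto simp: maximal_ideal_in_def)
  have "u * v - 1 = (u - 1) * v + (v - 1)" by (simp add: algebra_simps)
  moreover have "(u - 1) * v + (v - 1) \<in> A" using u v by auto
  ultimately have "u * v - 1 \<in> A" by metis
  moreover have "u * v \<in> B" "u * v \<in> C" "u * v \<in> T" using u v by auto
  ultimately show ?thesis by blast
qed

locale D0 =
  fixes R :: "'a::comm_ring_1 set" and M T
  assumes loc: "local_ring R"
    and Mmax: "maximal_ideal_in R M"
    and Tsub: "is_subring T"
    and RT: "R \<subseteq> T"
    and quad: "\<And>x y. x \<in> T \<Longrightarrow> y \<in> T \<Longrightarrow> \<exists>a\<in>R. \<exists>b\<in>R. \<exists>c\<in>R. x * y = a * x + b * y + c"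
begin

lemma Rsub: "is_subring R" using loc by (simp add: local_ring_def)

sublocale T: subr T using Tsub by unfold_locales
sublocale R: subr R using Rsub by unfold_locales
sublocale M: idl R M using Rsub Mmax by unfold_locales (auto simp: maximal_ideal_in_def)

lemma one_notin_M: "1 \<notin> M" using maximal_one[OF Rsub Mmax] .

lemma inR[simp]: "x \<in> R \<Longrightarrow> x \<in> T" using RT by auto
lemma MR[simp]: "x \<in> M \<Longrightarrow> x \<in> R" using M.sub by auto

lemma quad1: "x \<in> T \<Longrightarrow> \<exists>a\<in>R. \<exists>c\<in>R. x * x = a * x + c"
proof -
  assume x: "x \<in> T"
  then obtain a b c where "a \<in> R" "b \<in> R" "c \<in> R" "x * x = a * x + b * x + c" using quad by blast
  then show ?thesis by (intro bexI[of _ "a + b"] bexI[of _ c]) (auto simp: algebra_simps)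
qed

lemma unitR: "x \<in> R \<Longrightarrow> x \<notin> M \<Longrightarrow> \<exists>y\<in>R. x * y = 1"
  using local_unit[OF loc Mmax] by blast

lemma capR:
  assumes N: "maximal_ideal_in T N" and r: "r \<in> R"
  shows "r \<in> N \<longleftrightarrow> r \<in> M"
proof -
  interpret N: idl T N using Tsub N by unfold_locales (auto simp: maximal_ideal_in_def)
  have one: "1 \<notin> N" using maximal_one[OF Tsub N] .
  have sub: "r \<in> M" if rr: "r \<in> R" "r \<in> N" for r
  proof (rule ccontr)
    assume "r \<notin> M"
    then obtain y where y: "y \<in> R" "r * y = 1" using unitR rr by blast
    have "r * y \<in> N" using rr(2) y(1) by simp
    then have "1 \<in> N" using y(2) by metis
    then show False using one by simp
  qed
  have sup: "m \<in> N" if m: "m \<in> M" for m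
  proof (rule ccontr)
    assume mN: "m \<notin> N"
    have mT: "m \<in> T" using m by auto
    obtain p t where pt: "p \<in> N" "t \<in> T" "1 = p + t * m" using max_comax[OF Tsub N mT mN] by blast
    obtain A c where Ac: "A \<in> R" "c \<in> R" "t * t = A * t + c" using quad1[OF pt(2)] by blast
    have eq: "1 - A * m - c * m * m = 2 * p - p * p - A * m * p"
    proof -
      have "t * m = 1 - p" using pt by (simp add: algebra_simps)
      have "(t * m) * (t * m) = A * m * (t * m) + c * m * m"
      proof -
        have "(t * m) * (t * m) = (t * t) * (m * m)" by (simp add: algebra_simps)
        also have "\<dots> = (A * t + c) * (m * m)" using Ac(3) by simp
        finally show ?thesis by (simp add: algebra_simps)
      qed
      then have "(1 - p) * (1 - p) = A * m * (1 - p) + c * m * m" using \<open>t * m = 1 - p\<close> by simp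
      then show ?thesis by (simp add: algebra_simps)
    qed
    have pT: "p \<in> T" using pt N.sub by auto
    have "2 * p - p * p - A * m * p \<in> N" using pt pT Ac mT by auto
    then have "1 - A * m - c * m * m \<in> N" using eq by simp
    moreover have "1 - A * m - c * m * m \<in> R" using Ac m by auto
    ultimately have "1 - A * m - c * m * m \<in> M" using sub by blast
    moreover have "A * m + c * m * m \<in> M" using Ac m by auto
    ultimately have "(1 - A * m - c * m * m) + (A * m + c * m * m) \<in> M" by (rule M.iadd)
    then show False using one_notin_M by (simp add: algebra_simps)
  qed
  show ?thesis using sub sup r by blast
qed

end


context D0
begin

lemma maxI: "maximal_ideal_in T N \<Longrightarrow> idl T N"
  using Tsub by unfold_locales (auto simp: maximal_ideal_in_def)

lemma resid:
  assumes A: "maximal_ideal_in T A" and B: "maximal_ideal_in T B" and C: "maximal_ideal_in T C"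
    and ne: "A \<noteq> B" "A \<noteq> C" "B \<noteq> C" and x: "x \<in> T"
  shows "\<exists>a\<in>R. x - a \<in> A"
proof -
  interpret A: idl T A using maxI[OF A] .
  interpret B: idl T B using maxI[OF B] .
  interpret C: idl T C using maxI[OF C] .
  obtain e1 where e1: "e1 \<in> T" "e1 \<in> B" "e1 \<in> C" "e1 - 1 \<in> A" using max_three[OF Tsub A B C ne(1,2)] by blast
  obtain e2 where e2: "e2 \<in> T" "e2 \<in> A" "e2 \<in> C" "e2 - 1 \<in> B" using max_three[OF Tsub B A C ne(1)[symmetric] ne(3)] by blast
  define Y where "Y = x * e1 + e2"
  have Y: "Y \<in> T" "Y \<in> C" unfolding Y_def using x e1 e2 by auto
  obtain a b c where abc: "a \<in> R" "b \<in> R" "c \<in> R" "e1 * Y = a * e1 + b * Y + c" using quad[OF e1(1) Y(1)] by blast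
  have aT: "a \<in> T" "b \<in> T" "c \<in> T" using abc by auto
  have "c = e1 * Y - a * e1 - b * Y" using abc(4) by (simp add: algebra_simps)
  moreover have "e1 * Y - a * e1 - b * Y \<in> C" using Y e1 aT by simp
  ultimately have "c \<in> C" by simp
  then have cM: "c \<in> M" using capR[OF C abc(3)] by simp
  have Y1: "Y - 1 \<in> B" proof -
    have "Y - 1 = x * e1 + (e2 - 1)" unfolding Y_def by simp
    moreover have "x * e1 + (e2 - 1) \<in> B" using x e1 e2 by (blast intro: B.iadd B.imultl)
    ultimately show ?thesis by metis
  qed
  have eqb: "b = e1 * Y - a * e1 - b * (Y - 1) - c" using abc(4) by (simp add: algebra_simps)
  have cB: "c \<in> B" using cM capR[OF B abc(3)] by simp
  have "e1 * Y - a * e1 - b * (Y - 1) - c \<in> B"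
    using e1 Y Y1 aT cB by (blast intro: B.idiff B.imultl B.imultr)
  then have "b \<in> B" using eqb by metis
  then have bM: "b \<in> M" using capR[OF B abc(2)] by simp
  have "x - a = - x * (e1 - 1) * (e1 + 1) - e1 * e2 + a * (e1 - 1) + (e1 * Y - a * e1)"
    unfolding Y_def by (simp add: algebra_simps)
  also have "\<dots> = - x * (e1 - 1) * (e1 + 1) - e1 * e2 + a * (e1 - 1) + (b * Y + c)" using abc(4) by (simp add: algebra_simps)
  finally have eqx: "x - a = - x * (e1 - 1) * (e1 + 1) - e1 * e2 + a * (e1 - 1) + (b * Y + c)" .
  have bA: "b \<in> A" "c \<in> A" using bM cM capR[OF A] abc by auto
  have "- x * (e1 - 1) * (e1 + 1) - e1 * e2 + a * (e1 - 1) + (b * Y + c) \<in> A"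
    using x e1 e2 aT bA Y by (blast intro: A.iadd A.idiff A.imultl A.imultr A.iuminus T.add T.uminus T.one)
  then have "x - a \<in> A" using eqx by metis
  then show ?thesis using abc(1) by blast
qed

lemma RF2:
  assumes A: "maximal_ideal_in T A" and B: "maximal_ideal_in T B" and C: "maximal_ideal_in T C"
    and ne: "A \<noteq> B" "A \<noteq> C" "B \<noteq> C" and r: "r \<in> R"
  shows "r \<in> M \<or> r - 1 \<in> M"
proof (rule ccontr)
  assume nn: "\<not> (r \<in> M \<or> r - 1 \<in> M)"
  interpret A: idl T A using maxI[OF A] .
  interpret B: idl T B using maxI[OF B] .
  interpret C: idl T C using maxI[OF C] .
  obtain e2 where e2: "e2 \<in> T" "e2 \<in> A" "e2 \<in> C" "e2 - 1 \<in> B" using max_three[OF Tsub B A C ne(1)[symmetric] ne(3)] by blast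
  obtain e3 where e3: "e3 \<in> T" "e3 \<in> A" "e3 \<in> B" "e3 - 1 \<in> C" using max_three[OF Tsub C A B ne(2)[symmetric] ne(3)[symmetric]] by blast
  have rT: "r \<in> T" using r by auto
  define X where "X = e2 + r * e3"
  have X: "X \<in> T" "X \<in> A" unfolding X_def using e2 e3 rT by auto
  obtain a c where ac: "a \<in> R" "c \<in> R" "X * X = a * X + c" using quad1[OF X(1)] by blast
  have aT: "a \<in> T" "c \<in> T" using ac by auto
  have "c = X * X - a * X" using ac(3) by (simp add: algebra_simps)
  then have "c \<in> A" using X aT by simp
  then have cM: "c \<in> M" using capR[OF A ac(2)] by simp
  have X1: "X - 1 \<in> B" proof -
    have "X - 1 = (e2 - 1) + r * e3" unfolding X_def by simp
    moreover have "(e2 - 1) + r * e3 \<in> B" using e2 e3 rT by (blast intro: B.iadd B.imultl)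
    ultimately show ?thesis by metis
  qed
  have "a - 1 = (X - 1) * (X + 1) - a * (X - 1) - c - (X * X - a * X - c)" by (simp add: algebra_simps)
  also have "\<dots> = (X - 1) * (X + 1) - a * (X - 1) - c" using ac(3) by simp
  finally have "a - 1 \<in> B" using X1 X aT cM capR[OF B ac(2)] by simp
  then have a1M: "a - 1 \<in> M" using capR[OF B] ac(1) by simp
  have Xr: "X - r \<in> C" proof -
    have "X - r = e2 + r * (e3 - 1)" unfolding X_def by (simp add: algebra_simps)
    then show ?thesis using e2 e3 rT by simp
  qed
  have "r * r - r = (r - X) * (r + X) + a * (X - r) + (a - 1) * r + c + (X * X - a * X - c)"
    by (simp add: algebra_simps)
  also have "\<dots> = (r - X) * (r + X) + a * (X - r) + (a - 1) * r + c" using ac(3) by simp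
  finally have "r * r - r \<in> C"
  proof -
    assume eq: "r * r - r = (r - X) * (r + X) + a * (X - r) + (a - 1) * r + c"
    have "r - X \<in> C" using C.iuminus[OF Xr] by simp
    moreover have "a - 1 \<in> C" "c \<in> C" using a1M cM capR[OF C] ac by auto
    ultimately show ?thesis unfolding eq using Xr X rT aT by simp
  qed
  then have rrM: "r * r - r \<in> M" using capR[OF C] r by simp
  have "r \<notin> M" using nn by simp
  then obtain y where y: "y \<in> R" "r * y = 1" using unitR r by blast
  have "r - 1 = y * (r * r - r)" using y(2) by (simp add: algebra_simps)
  then have "r - 1 \<in> M" using rrM y(1) by simp
  then show False using nn by simp
qed

end

locale D3 = D0 +
  fixes N1 N2 N3
  assumes N1: "maximal_ideal_in T N1" and N2: "maximal_ideal_in T N2" and N3: "maximal_ideal_in T N3"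
    and n12: "N1 \<noteq> N2" and n13: "N1 \<noteq> N3" and n23: "N2 \<noteq> N3"
    and allN: "\<And>N. maximal_ideal_in T N \<Longrightarrow> N = N1 \<or> N = N2 \<or> N = N3"
begin

lemma others:
  assumes "maximal_ideal_in T A"
  obtains B C where "maximal_ideal_in T B" "maximal_ideal_in T C" "A \<noteq> B" "A \<noteq> C" "B \<noteq> C"
  using allN[OF assms] N1 N2 N3 n12 n13 n23 by metis

lemma RF: "r \<in> R \<Longrightarrow> r \<in> M \<or> r - 1 \<in> M"
  using RF2[OF N1 N2 N3 n12 n13 n23] by blast

lemma two_M: "2 \<in> M"
proof -
  have "(2::'a) \<in> R" by simp
  then have "2 \<in> M \<or> 2 - 1 \<in> M" using RF by blast
  then show ?thesis using one_notin_M by simp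
qed

lemma TF:
  assumes A: "maximal_ideal_in T A" and x: "x \<in> T"
  shows "x \<in> A \<or> x - 1 \<in> A"
proof -
  obtain B C where BC: "maximal_ideal_in T B" "maximal_ideal_in T C" "A \<noteq> B" "A \<noteq> C" "B \<noteq> C"
    using others[OF A] by blast
  interpret A: idl T A using maxI[OF A] .
  obtain a where a: "a \<in> R" "x - a \<in> A" using resid[OF A BC x] by blast
  have aT: "a \<in> T" using a by auto
  show ?thesis
  proof (cases "a \<in> M")
    case True
    then have "a \<in> A" using capR[OF A a(1)] by simp
    then have "(x - a) + a \<in> A" using a by (blast intro: A.iadd)
    then show ?thesis by simp
  next
    case False
    then have "a - 1 \<in> M" using RF a by blast
    then have "a - 1 \<in> A" using capR[OF A] a by simp
    then have "(x - a) + (a - 1) \<in> A" using a by (blast intro: A.iadd)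
    then show ?thesis by simp
  qed
qed

lemma primeT:
  assumes A: "maximal_ideal_in T A" and x: "x \<in> T" "x \<notin> A" and y: "y \<in> T" and xy: "x * y \<in> A"
  shows "y \<in> A"
proof -
  interpret A: idl T A using maxI[OF A] .
  have "x - 1 \<in> A" using TF[OF A x(1)] x(2) by blast
  then have "x * y - (x - 1) * y \<in> A" using xy y by simp
  then show ?thesis by (simp add: algebra_simps)
qed

lemma notin_one: "maximal_ideal_in T A \<Longrightarrow> 1 \<notin> A"
  using maximal_one[OF Tsub] .

end


locale D4 = D3 +
  fixes f :: "'a::comm_ring_1 \<Rightarrow> 'a \<Rightarrow> 'a" and b0 c0
  assumes R1T: "Endo M \<subseteq> T"
    and fR1: "\<And>x y. x \<in> M \<Longrightarrow> y \<in> M \<Longrightarrow> f x y \<in> Endo M"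
    and ffin: "\<And>x. x \<in> M \<Longrightarrow> finite {y\<in>M. f x y \<noteq> 0}"
    and fsum: "\<And>x. x \<in> M \<Longrightarrow> x = (\<Sum>y\<in>{y\<in>M. f x y \<noteq> 0}. f x y * y)"
    and fadd: "\<And>x1 x2 y. x1 \<in> M \<Longrightarrow> x2 \<in> M \<Longrightarrow> y \<in> M \<Longrightarrow> f (x1 + x2) y = f x1 y + f x2 y"
    and fmult: "\<And>e x y. e \<in> Endo M \<Longrightarrow> x \<in> M \<Longrightarrow> y \<in> M \<Longrightarrow> f (e * x) y = e * f x y"
    and b0: "b0 \<in> M" and b0c0: "b0 * c0 = 1"
begin

abbreviation "R1 \<equiv> Endo M"

lemma R1sub: "is_subring R1"
  by (rule Endo_subring) auto

sublocale R1: subr R1 using R1sub by unfold_locales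

lemma R1M: "s \<in> R1 \<Longrightarrow> x \<in> M \<Longrightarrow> s * x \<in> M"
  by (simp add: Endo_def)

lemma RR1: "x \<in> R \<Longrightarrow> x \<in> R1"
  by (simp add: Endo_def)

lemma MR1: "x \<in> M \<Longrightarrow> x \<in> R1"
  using RR1 by auto

lemma R1T': "x \<in> R1 \<Longrightarrow> x \<in> T" using R1T by auto

lemma fT: "x \<in> M \<Longrightarrow> y \<in> M \<Longrightarrow> f x y \<in> T" using fR1 R1T' by blast

lemma comm: assumes x: "x \<in> M" and y: "y \<in> M" shows "c0 * f b0 y * x = f x y"
proof -
  have "f (x * b0) y = x * f b0 y" using fmult[OF MR1[OF x] b0 y] .
  moreover have "f (b0 * x) y = b0 * f x y" using fmult[OF MR1[OF b0] x y] .
  ultimately have "x * f b0 y = b0 * f x y" by (simp add: mult.commute)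
  then have "c0 * (x * f b0 y) = (c0 * b0) * f x y" by (simp add: mult.assoc)
  then show ?thesis using b0c0 by (simp add: algebra_simps)
qed

definition "Sb = {y\<in>M. f b0 y \<noteq> 0}"

lemma Sb_fin: "finite Sb" using ffin[OF b0] by (simp add: Sb_def)

lemma one_sum: "1 = (\<Sum>y\<in>Sb. f y y)"
proof -
  have "1 = c0 * b0" using b0c0 by (simp add: mult.commute)
  also have "\<dots> = c0 * (\<Sum>y\<in>Sb. f b0 y * y)" using fsum[OF b0] by (simp add: Sb_def)
  also have "\<dots> = (\<Sum>y\<in>Sb. c0 * f b0 y * y)" by (simp add: sum_distrib_left mult.assoc)
  also have "\<dots> = (\<Sum>y\<in>Sb. f y y)" by (rule sum.cong) (auto simp: Sb_def comm)
  finally show ?thesis .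
qed

lemma crux_claim:
  assumes H: "\<And>r. r \<in> R1 \<Longrightarrow> r \<in> N1 \<Longrightarrow> r \<in> N2"
    and m: "m \<in> M" and y: "y \<in> M"
  shows "f m y \<in> N2"
proof -
  interpret A: idl T N1 using maxI[OF N1] .
  interpret B: idl T N2 using maxI[OF N2] .
  interpret C: idl T N3 using maxI[OF N3] .
  have MN: "\<And>z. z \<in> M \<Longrightarrow> z \<in> N1 \<and> z \<in> N2 \<and> z \<in> N3" using capR N1 N2 N3 MR by blast
  obtain e2 where e2: "e2 \<in> T" "e2 \<in> N1" "e2 \<in> N3" "e2 - 1 \<in> N2" using max_three[OF Tsub N2 N1 N3 n12[symmetric] n23] by blast
  obtain e3 where e3: "e3 \<in> T" "e3 \<in> N1" "e3 \<in> N2" "e3 - 1 \<in> N3" using max_three[OF Tsub N3 N1 N2 n13[symmetric] n23[symmetric]] by blast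
  have mT: "m \<in> T" using m by auto
  define x where "x = m * e2 + e3"
  have x: "x \<in> T" "x \<in> N1" unfolding x_def using mT e2 e3 by auto
  obtain A c where Ac: "A \<in> R" "c \<in> R" "x * x = A * x + c" using quad1[OF x(1)] by blast
  obtain al g where ag: "al \<in> R" "g \<in> R" "e3 * e3 = al * e3 + g" using quad1[OF e3(1)] by blast
  have AT: "A \<in> T" "c \<in> T" "al \<in> T" "g \<in> T" using Ac ag by auto
  have "c = x * x - A * x" using Ac(3) by (simp add: algebra_simps)
  moreover have "x * x - A * x \<in> N1" using x AT by simp
  ultimately have cM: "c \<in> M" using capR[OF N1 Ac(2)] by simp
  have "g = e3 * e3 - al * e3" using ag(3) by (simp add: algebra_simps)
  moreover have "e3 * e3 - al * e3 \<in> N1" using e3 AT by simp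
  ultimately have gM: "g \<in> M" using capR[OF N1 ag(2)] by simp
  have x1: "x - 1 \<in> N3"
  proof -
    have "x - 1 = m * e2 + (e3 - 1)" unfolding x_def by simp
    moreover have "m * e2 + (e3 - 1) \<in> N3" using mT e2 e3 by (blast intro: C.iadd C.imultl)
    ultimately show ?thesis by metis
  qed
  have "A - 1 = (x - 1) * (x + 1) - A * (x - 1) - c" using Ac(3) by (simp add: algebra_simps)
  moreover have "(x - 1) * (x + 1) - A * (x - 1) - c \<in> N3"
    using x1 x AT MN[OF cM] by (blast intro: C.idiff C.imultl C.imultr T.add T.one)
  ultimately have A1: "A - 1 \<in> M" using capR[OF N3] Ac(1) by (metis R.diff R.one)
  have "al - 1 = (e3 - 1) * (e3 + 1) - al * (e3 - 1) - g" using ag(3) by (simp add: algebra_simps)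
  moreover have "(e3 - 1) * (e3 + 1) - al * (e3 - 1) - g \<in> N3"
    using e3 AT MN[OF gM] by (blast intro: C.idiff C.imultl C.imultr T.add T.one)
  ultimately have al1: "al - 1 \<in> M" using capR[OF N3] ag(1) by (metis R.diff R.one)
  define d where "d = al - A"
  define ep where "ep = g - c"
  have dM: "d \<in> M" unfolding d_def using M.idiff[OF al1 A1] by simp
  have epM: "ep \<in> M" unfolding ep_def using gM cM by simp
  define w where "w = A * e2 - m * e2 * e2 - 2 * e2 * e3"
  have eq: "d * e3 + ep = m * w"
  proof -
    have "d * e3 + ep = e3 * e3 - A * e3 - c" unfolding d_def ep_def using ag(3) by (simp add: algebra_simps)
    also have "\<dots> = x * x - A * x - c + (A * m * e2 - m * m * e2 * e2 - 2 * m * e2 * e3)"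
      unfolding x_def by (simp add: algebra_simps)
    also have "\<dots> = A * m * e2 - m * m * e2 * e2 - 2 * m * e2 * e3" using Ac(3) by simp
    finally show ?thesis unfolding w_def by (simp add: algebra_simps)
  qed
  define q where "q = c0 * f b0 y"
  have eq2: "f d y * e3 + f ep y = f m y * w"
  proof -
    have "q * (d * e3 + ep) = q * (m * w)" using eq by simp
    then have "(q * d) * e3 + q * ep = (q * m) * w" by (simp add: algebra_simps)
    moreover have "q * d = f d y" "q * ep = f ep y" "q * m = f m y" unfolding q_def using comm dM epM m y by auto
    ultimately show ?thesis by simp
  qed
  have r123: "f d y \<in> R1" "f ep y \<in> R1" "f m y \<in> R1" using fR1 dM epM m y by auto
  have rT: "f d y \<in> T" "f ep y \<in> T" "f m y \<in> T" using r123 R1T' by auto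
  have wT: "w \<in> T" unfolding w_def using AT mT e2 e3 by simp
  have wN1: "w \<in> N1"
  proof -
    have "A * e2 - m * e2 * e2 - 2 * e2 * e3 \<in> N1" using AT mT e2 e3 by (blast intro: A.idiff A.imultl A.imultr T.mult T.numeral)
    then show ?thesis unfolding w_def .
  qed
  have "f ep y = f m y * w - f d y * e3" using eq2 by (simp add: algebra_simps)
  moreover have "f m y * w - f d y * e3 \<in> N1" using rT wN1 e3 by (blast intro: A.idiff A.imultl A.imultr)
  ultimately have "f ep y \<in> N1" by simp
  then have r2: "f ep y \<in> N2" using H r123(2) by blast
  have w1: "w - 1 \<in> N2"
  proof -
    have "w - 1 = A * (e2 - 1) + (A - 1) - m * e2 * e2 - 2 * e2 * e3" unfolding w_def by (simp add: algebra_simps)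
    moreover have "A * (e2 - 1) + (A - 1) - m * e2 * e2 - 2 * e2 * e3 \<in> N2"
      using AT e2 e3 MN[OF A1] MN[OF m] mT by (blast intro: B.idiff B.iadd B.imultl B.imultr T.mult T.numeral)
    ultimately show ?thesis by metis
  qed
  have "f m y = f m y * (1 - w) + f d y * e3 + f ep y" using eq2 by (simp add: algebra_simps)
  moreover have "f m y * (1 - w) + f d y * e3 + f ep y \<in> N2"
  proof -
    have "1 - w \<in> N2" using B.iuminus[OF w1] by simp
    then show ?thesis using rT e3 r2 by (blast intro: B.iadd B.imultl B.imultr)
  qed
  ultimately show ?thesis by metis
qed

lemma crux: "\<exists>r\<in>R1. r \<in> N1 \<and> r \<notin> N2"
proof (rule ccontr)
  assume "\<not> ?thesis"
  then have H: "\<And>r. r \<in> R1 \<Longrightarrow> r \<in> N1 \<Longrightarrow> r \<in> N2" by blast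
  interpret B: idl T N2 using maxI[OF N2] .
  have "(\<Sum>y\<in>Sb. f y y) \<in> N2"
    by (rule B.isum) (auto simp: Sb_def intro: crux_claim[OF H])
  then have "1 \<in> N2" using one_sum by simp
  then show False using notin_one[OF N2] by simp
qed

end


context D4
begin

lemma capR1:
  assumes N: "maximal_ideal_in T N"
  shows "maximal_ideal_in R1 (N \<inter> R1)"
proof -
  interpret N: idl T N using maxI[OF N] .
  have id: "ideal_in R1 (N \<inter> R1)"
  proof (rule ideal_inI)
    show "N \<inter> R1 \<subseteq> R1" by blast
    show "0 \<in> N \<inter> R1" by simp
  next
    fix x y assume xy: "x \<in> N \<inter> R1" "y \<in> N \<inter> R1"
    then have "x \<in> N" "y \<in> N" "x \<in> R1" "y \<in> R1" by auto
    then show "x + y \<in> N \<inter> R1" "x - y \<in> N \<inter> R1" by (simp_all only: IntI N.iadd N.idiff R1.add R1.diff)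
  next
    fix s x assume sx: "s \<in> R1" "x \<in> N \<inter> R1"
    then have "x \<in> N" "x \<in> R1" "s \<in> T" using R1T' by auto
    then have "s * x \<in> N" "s * x \<in> R1" using sx(1) by (simp_all only: N.imultl R1.mult)
    then show "s * x \<in> N \<inter> R1" by blast
  qed
  have ne: "N \<inter> R1 \<noteq> R1" using notin_one[OF N] R1.one by blast
  show ?thesis unfolding maximal_ideal_in_def
  proof (intro conjI id ne allI impI)
    fix J assume J: "ideal_in R1 J \<and> N \<inter> R1 \<subseteq> J"
    interpret J: idl R1 J using J R1sub by unfold_locales auto
    show "J = N \<inter> R1 \<or> J = R1"
    proof (cases "J \<subseteq> N \<inter> R1")
      case True then show ?thesis using J by blast
    next
      case False
      then obtain x where x: "x \<in> J" "x \<notin> N \<inter> R1" by blast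
      have xR: "x \<in> R1" using x(1) J.sub by blast
      then have xN: "x \<notin> N" using x(2) by blast
      have "x - 1 \<in> N" using TF[OF N R1T'[OF xR]] xN by blast
      moreover have "x - 1 \<in> R1" using xR by (simp only: R1.diff R1.one)
      ultimately have "x - 1 \<in> J" using J by blast
      then have "x - (x - 1) \<in> J" using x(1) by (rule J.idiff[rotated])
      then have "1 \<in> J" by simp
      then show ?thesis using J.one_iff by blast
    qed
  qed
qed

lemma M_sub_max:
  assumes P: "maximal_ideal_in R1 P"
  shows "M \<subseteq> P"
proof
  fix m assume m: "m \<in> M"
  interpret P: idl R1 P using R1sub P by unfold_locales (auto simp: maximal_ideal_in_def)
  show "m \<in> P"
  proof (rule ccontr)
    assume mP: "m \<notin> P"
    obtain p t where pt: "p \<in> P" "t \<in> R1" "1 = p + t * m" using max_comax[OF R1sub P MR1[OF m] mP] by blast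
    have tm: "t * m \<in> M" using R1M pt m by auto
    have peq: "p = 1 - t * m" using pt by (simp add: algebra_simps)
    have pR: "p \<in> R" using peq tm by simp
    have "p \<notin> M"
    proof
      assume "p \<in> M"
      then have "p + t * m \<in> M" using tm by (blast intro: M.iadd)
      then show False using pt one_notin_M by simp
    qed
    then obtain z where z: "z \<in> R" "p * z = 1" using unitR pR by blast
    have "p * z \<in> P" using pt(1) RR1[OF z(1)] by simp
    then have "1 \<in> P" using z by metis
    then show False using maximal_one[OF R1sub P] by simp
  qed
qed

lemma JacR1: "Jac R1 = M"
proof
  show "M \<subseteq> Jac R1" unfolding Jac_def using M_sub_max by auto
next
  show "Jac R1 \<subseteq> M"
  proof
    fix n assume n: "n \<in> Jac R1"
    have nN: "n \<in> N1 \<inter> R1" "n \<in> N2 \<inter> R1" using n capR1[OF N1] capR1[OF N2] unfolding Jac_def by auto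
    have nR1: "n \<in> R1" and n1: "n \<in> N1" and n2: "n \<in> N2" using nN by auto
    have nT: "n \<in> T" using nR1 R1T' by auto
    interpret A: idl T N1 using maxI[OF N1] .
    interpret B: idl T N2 using maxI[OF N2] .
    obtain a c where ac: "a \<in> R" "c \<in> R" "n * n = a * n + c" using quad1[OF nT] by blast
    have acT: "a \<in> T" "c \<in> T" using ac by auto
    have "c = n * n - a * n" using ac(3) by (simp add: algebra_simps)
    moreover have "n * n - a * n \<in> N1" using n1 nT acT by simp
    ultimately have cM: "c \<in> M" using capR[OF N1 ac(2)] by simp
    show "n \<in> M"
    proof (cases "a \<in> M")
      case False
      then have a1: "a - 1 \<in> M" using RF ac(1) by blast
      have u: "n - a \<in> R1" using nR1 RR1[OF ac(1)] by simp
      have "\<exists>z\<in>R1. (n - a) * z = 1"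
      proof (rule unit_lemma[OF R1sub u])
        fix P assume P: "maximal_ideal_in R1 P"
        interpret P: idl R1 P using R1sub P by unfold_locales (auto simp: maximal_ideal_in_def)
        show "n - a \<notin> P"
        proof
          assume "n - a \<in> P"
          moreover have "n \<in> P" using n P unfolding Jac_def by auto
          ultimately have "n - (n - a) \<in> P" by (blast intro: P.idiff)
          then have aP: "a \<in> P" by simp
          have "a - 1 \<in> P" using a1 M_sub_max[OF P] by auto
          then have "a - (a - 1) \<in> P" using aP by (blast intro: P.idiff)
          then show False using maximal_one[OF R1sub P] by simp
        qed
      qed
      then obtain z where z: "z \<in> R1" "(n - a) * z = 1" by blast
      have "n = n * ((n - a) * z)" using z by simp
      also have "\<dots> = z * (n * n - a * n)" by (simp add: algebra_simps)
      also have "\<dots> = z * c" using ac(3) by simp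
      finally show ?thesis using R1M[OF z(1) cM] by simp
    next
      case True
      have nnM: "n * n \<in> M"
      proof -
        have "n * a \<in> M" using R1M[OF nR1 True] .
        then have "a * n + c \<in> M" using cM by (simp add: mult.commute)
        then show ?thesis using ac(3) by simp
      qed
      obtain r0 where r0: "r0 \<in> R1" "r0 \<in> N1" "r0 \<notin> N2" using crux by blast
      have r0T: "r0 \<in> T" using r0 R1T' by auto
      have r01: "r0 - 1 \<in> N2" using TF[OF N2 r0T] r0 by blast
      obtain al g where ag: "al \<in> R" "g \<in> R" "r0 * r0 = al * r0 + g" using quad1[OF r0T] by blast
      have agT: "al \<in> T" "g \<in> T" using ag by auto
      have "g = r0 * r0 - al * r0" using ag(3) by (simp add: algebra_simps)
      moreover have "r0 * r0 - al * r0 \<in> N1" using r0 r0T agT by simp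
      ultimately have gM: "g \<in> M" using capR[OF N1 ag(2)] by simp
      have gN2: "g \<in> N2" using capR[OF N2 ag(2)] gM by simp
      have "al - 1 = (r0 - 1) * (r0 + 1) - al * (r0 - 1) - g" using ag(3) by (simp add: algebra_simps)
      moreover have "(r0 - 1) * (r0 + 1) - al * (r0 - 1) - g \<in> N2"
        using r01 r0T agT gN2 by (blast intro: B.idiff B.imultl B.imultr T.add T.one)
      ultimately have al1: "al - 1 \<in> M" using capR[OF N2] ag(1) by (metis R.diff R.one)
      have eM: "r0 * r0 - r0 \<in> M"
      proof -
        have "r0 * r0 - r0 = r0 * (al - 1) + g" using ag(3) by (simp add: algebra_simps)
        moreover have "r0 * (al - 1) + g \<in> M" using R1M[OF r0(1) al1] gM by (blast intro: M.iadd)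
        ultimately show ?thesis by metis
      qed
      define x where "x = r0 + n"
      have xT: "x \<in> T" "x \<in> N1" unfolding x_def using r0T nT r0 n1 by auto
      obtain A C where AC: "A \<in> R" "C \<in> R" "x * x = A * x + C" using quad1[OF xT(1)] by blast
      have ACT: "A \<in> T" "C \<in> T" using AC by auto
      have "C = x * x - A * x" using AC(3) by (simp add: algebra_simps)
      moreover have "x * x - A * x \<in> N1" using xT ACT by simp
      ultimately have CM: "C \<in> M" using capR[OF N1 AC(2)] by simp
      have CN2: "C \<in> N2" using capR[OF N2 AC(2)] CM by simp
      have x1: "x - 1 \<in> N2"
      proof -
        have "x - 1 = (r0 - 1) + n" unfolding x_def by simp
        moreover have "(r0 - 1) + n \<in> N2" using r01 n2 by (blast intro: B.iadd)
        ultimately show ?thesis by metis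
      qed
      have "A - 1 = (x - 1) * (x + 1) - A * (x - 1) - C" using AC(3) by (simp add: algebra_simps)
      moreover have "(x - 1) * (x + 1) - A * (x - 1) - C \<in> N2"
        using x1 xT ACT CN2 by (blast intro: B.idiff B.imultl B.imultr T.add T.one)
      ultimately have A1: "A - 1 \<in> M" using capR[OF N2] AC(1) by (metis R.diff R.one)
      have "n = (r0 * r0 - r0) + (r0 * n) * 2 + n * n - r0 * (A - 1) - n * (A - 1) - C + (A * x + C - x * x)"
        unfolding x_def by (simp add: algebra_simps)
      also have "\<dots> = (r0 * r0 - r0) + (r0 * n) * 2 + n * n - r0 * (A - 1) - n * (A - 1) - C"
        using AC(3) by simp
      finally have neq: "n = (r0 * r0 - r0) + (r0 * n) * 2 + n * n - r0 * (A - 1) - n * (A - 1) - C" .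
      have "(r0 * n) * 2 \<in> M" using R1M[of "r0 * n" 2] r0(1) nR1 two_M by simp
      moreover have "r0 * (A - 1) \<in> M" "n * (A - 1) \<in> M" using R1M r0(1) nR1 A1 by auto
      ultimately have "(r0 * r0 - r0) + (r0 * n) * 2 + n * n - r0 * (A - 1) - n * (A - 1) - C \<in> M"
        using eM nnM CM by (blast intro: M.iadd M.idiff)
      then show ?thesis using neq by metis
    qed
  qed
qed

end


locale D5 = D4 +
  assumes R1eq: "Endo M = T"
begin

lemma JacT: "Jac T = M" using JacR1 R1eq by simp

lemma allABC:
  assumes A: "maximal_ideal_in T A" and B: "maximal_ideal_in T B" and C: "maximal_ideal_in T C"
    and ne: "A \<noteq> B" "A \<noteq> C" "B \<noteq> C" and P: "maximal_ideal_in T P"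
  shows "P = A \<or> P = B \<or> P = C"
  using allN[OF A] allN[OF B] allN[OF C] allN[OF P] ne n12 n13 n23 by metis

lemma inM_of_ABC:
  assumes A: "maximal_ideal_in T A" and B: "maximal_ideal_in T B" and C: "maximal_ideal_in T C"
    and ne: "A \<noteq> B" "A \<noteq> C" "B \<noteq> C" and x: "x \<in> A" "x \<in> B" "x \<in> C"
  shows "x \<in> M"
proof -
  have "x \<in> Jac T" unfolding Jac_def using allABC[OF A B C ne] x by blast
  then show ?thesis using JacT by simp
qed

lemma fRT: "x \<in> M \<Longrightarrow> y \<in> M \<Longrightarrow> f x y \<in> T" using fT .

lemma princ:
  assumes A: "maximal_ideal_in T A" and B: "maximal_ideal_in T B" and C: "maximal_ideal_in T C"
    and ne: "A \<noteq> B" "A \<noteq> C" "B \<noteq> C"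
  shows "principal_ideal_in T A"
proof -
  interpret A: idl T A using maxI[OF A] .
  interpret B: idl T B using maxI[OF B] .
  interpret C: idl T C using maxI[OF C] .
  have MA: "\<And>z. z \<in> M \<Longrightarrow> z \<in> A" "\<And>z. z \<in> M \<Longrightarrow> z \<in> B" "\<And>z. z \<in> M \<Longrightarrow> z \<in> C"
    using capR A B C MR by blast+
  obtain e1 where e1: "e1 \<in> T" "e1 \<in> B" "e1 \<in> C" "e1 - 1 \<in> A" using max_three[OF Tsub A B C ne(1,2)] by blast
  obtain e2 where e2: "e2 \<in> T" "e2 \<in> A" "e2 \<in> C" "e2 - 1 \<in> B" using max_three[OF Tsub B A C ne(1)[symmetric] ne(3)] by blast
  obtain e3 where e3: "e3 \<in> T" "e3 \<in> A" "e3 \<in> B" "e3 - 1 \<in> C" using max_three[OF Tsub C A B ne(2)[symmetric] ne(3)[symmetric]] by blast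
  have "\<exists>y1\<in>Sb. f y1 y1 \<notin> A"
  proof (rule ccontr)
    assume "\<not> ?thesis"
    then have "(\<Sum>y\<in>Sb. f y y) \<in> A" by (intro A.isum) blast
    then have "1 \<in> A" using one_sum by simp
    then show False using notin_one[OF A] by simp
  qed
  then obtain y1 where y1: "y1 \<in> M" "f y1 y1 \<notin> A" unfolding Sb_def by blast
  define q where "q = c0 * f b0 y1"
  have qx: "\<And>x. x \<in> M \<Longrightarrow> q * x = f x y1" unfolding q_def using comm y1(1) by simp
  have y1T: "y1 \<in> T" using y1 by auto
  define a where "a = y1 * e1 + e2 * e2 + e3 * e3"
  define b where "b = q * (e1 * e1) + 1"
  have aT: "a \<in> T" unfolding a_def using y1T e1 e2 e3 by simp
  have aA: "a \<in> A"
  proof -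
    have "y1 * e1 + e2 * e2 + e3 * e3 \<in> A" using MA(1)[OF y1(1)] e1 e2 e3 by (blast intro: A.iadd A.imultl A.imultr)
    then show ?thesis unfolding a_def .
  qed
  have bx: "b * x \<in> T" if x: "x \<in> A" for x
  proof -
    have xT: "x \<in> T" using x A.sub by blast
    have "e1 * e1 * x \<in> A" "e1 * e1 * x \<in> B" "e1 * e1 * x \<in> C" using x xT e1 by auto
    then have "e1 * e1 * x \<in> M" using inM_of_ABC[OF A B C ne] by blast
    then have "q * (e1 * e1 * x) \<in> T" using qx fRT y1(1) by simp
    moreover have "b * x = q * (e1 * e1 * x) + x" unfolding b_def by (simp add: algebra_simps)
    ultimately show ?thesis using xT by simp
  qed
  have e12: "e1 * e2 \<in> M" using inM_of_ABC[OF A B C ne, of "e1 * e2"] e1 e2 by auto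
  have e13: "e1 * e3 \<in> M" using inM_of_ABC[OF A B C ne, of "e1 * e3"] e1 e3 by auto
  define F where "F = f y1 y1"
  define G2 where "G2 = f (e1 * e2) y1"
  define G3 where "G3 = f (e1 * e3) y1"
  have FGT: "F \<in> T" "G2 \<in> T" "G3 \<in> T" unfolding F_def G2_def G3_def using fRT y1(1) e12 e13 by auto
  have ab: "a * b = e1 * e1 * e1 * F + y1 * e1 + (e1 * e2) * G2 + (e1 * e3) * G3 + e2 * e2 + e3 * e3"
  proof -
    have "a * b = e1 * e1 * e1 * (q * y1) + y1 * e1 + (e1 * e2) * (q * (e1 * e2)) + (e1 * e3) * (q * (e1 * e3)) + e2 * e2 + e3 * e3"
      unfolding a_def b_def by (simp add: algebra_simps)
    then show ?thesis unfolding F_def G2_def G3_def using qx y1(1) e12 e13 by simp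
  qed
  have abT: "a * b \<in> T" using ab FGT e1 e2 e3 y1T by simp
  have nA: "a * b \<notin> A"
  proof
    assume abA: "a * b \<in> A"
    have "F = a * b - ((e1 - 1) * ((e1 * e1 + e1 + 1) * F) + y1 * e1 + (e1 * e2) * G2 + (e1 * e3) * G3 + e2 * e2 + e3 * e3)"
      unfolding ab by (simp add: algebra_simps)
    moreover have "a * b - ((e1 - 1) * ((e1 * e1 + e1 + 1) * F) + y1 * e1 + (e1 * e2) * G2 + (e1 * e3) * G3 + e2 * e2 + e3 * e3) \<in> A"
    proof -
      have t: "(e1 * e1 + e1 + 1) * F \<in> T" using e1 FGT by simp
      have "e1 * e2 \<in> A" "e1 * e3 \<in> A" using MA e12 e13 by auto
      then show ?thesis using abA t e1 e2 e3 y1T FGT MA(1)[OF y1(1)]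
        by (blast intro: A.iadd A.idiff A.imultl A.imultr)
    qed
    ultimately have "F \<in> A" by metis
    then show False using y1(2) F_def by simp
  qed
  have nB: "a * b \<notin> B"
  proof
    assume abB: "a * b \<in> B"
    have "1 = a * b - (e1 * e1 * e1 * F + y1 * e1 + (e1 * e2) * G2 + (e1 * e3) * G3 + (e2 - 1) * (e2 + 1) + e3 * e3)"
      unfolding ab by (simp add: algebra_simps)
    moreover have "a * b - (e1 * e1 * e1 * F + y1 * e1 + (e1 * e2) * G2 + (e1 * e3) * G3 + (e2 - 1) * (e2 + 1) + e3 * e3) \<in> B"
    proof -
      have "e1 * e2 \<in> B" "e1 * e3 \<in> B" "e1 * e1 * e1 * F \<in> B" using MA e12 e13 e1 FGT by auto
      then show ?thesis using abB e1 e2 e3 y1T FGT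
        by (blast intro: B.iadd B.idiff B.imultl B.imultr T.add T.one)
    qed
    ultimately have "1 \<in> B" by metis
    then show False using notin_one[OF B] by simp
  qed
  have nC: "a * b \<notin> C"
  proof
    assume abC: "a * b \<in> C"
    have "1 = a * b - (e1 * e1 * e1 * F + y1 * e1 + (e1 * e2) * G2 + (e1 * e3) * G3 + e2 * e2 + (e3 - 1) * (e3 + 1))"
      unfolding ab by (simp add: algebra_simps)
    moreover have "a * b - (e1 * e1 * e1 * F + y1 * e1 + (e1 * e2) * G2 + (e1 * e3) * G3 + e2 * e2 + (e3 - 1) * (e3 + 1)) \<in> C"
    proof -
      have "e1 * e2 \<in> C" "e1 * e3 \<in> C" "e1 * e1 * e1 * F \<in> C" using MA e12 e13 e1 FGT by auto
      then show ?thesis using abC e1 e2 e3 y1T FGT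
        by (blast intro: C.iadd C.idiff C.imultl C.imultr T.add T.one)
    qed
    ultimately have "1 \<in> C" by metis
    then show False using notin_one[OF C] by simp
  qed
  obtain z where z: "z \<in> T" "a * b * z = 1"
    using unit_lemma[OF Tsub abT] allABC[OF A B C ne] nA nB nC by metis
  have "A = {s * a | s. s \<in> T}"
  proof
    show "A \<subseteq> {s * a | s. s \<in> T}"
    proof
      fix x assume x: "x \<in> A"
      have "x = (b * x * z) * a" using z(2) by (simp add: algebra_simps) (metis mult.assoc mult.commute mult_1)
      moreover have "b * x * z \<in> T" using bx[OF x] z by simp
      ultimately show "x \<in> {s * a | s. s \<in> T}" by blast
    qed
    show "{s * a | s. s \<in> T} \<subseteq> A" using aA by auto
  qed
  then show ?thesis unfolding principal_ideal_in_def using aT by blast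
qed

lemma residue2:
  assumes A: "maximal_ideal_in T A"
  shows "card (residue_ring T A) = 2"
proof -
  interpret A: idl T A using maxI[OF A] .
  have tr: "(\<lambda>m. x + m) ` A = (\<lambda>m. y + m) ` A" if "x - y \<in> A" "x \<in> T" "y \<in> T" for x y
  proof
    show "(\<lambda>m. x + m) ` A \<subseteq> (\<lambda>m. y + m) ` A"
    proof
      fix u assume "u \<in> (\<lambda>m. x + m) ` A"
      then obtain m where m: "m \<in> A" "u = x + m" by blast
      have "(x - y) + m \<in> A" using that m by (blast intro: A.iadd)
      moreover have "u = y + ((x - y) + m)" using m by simp
      ultimately show "u \<in> (\<lambda>m. y + m) ` A" by blast
    qed
  next
    show "(\<lambda>m. y + m) ` A \<subseteq> (\<lambda>m. x + m) ` A"
    proof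
      fix u assume "u \<in> (\<lambda>m. y + m) ` A"
      then obtain m where m: "m \<in> A" "u = y + m" by blast
      have "m - (x - y) \<in> A" using that m by (blast intro: A.idiff)
      moreover have "u = x + (m - (x - y))" using m by simp
      ultimately show "u \<in> (\<lambda>m. x + m) ` A" by blast
    qed
  qed
  have eq: "residue_ring T A = {(\<lambda>m. 0 + m) ` A, (\<lambda>m. 1 + m) ` A}"
  proof
    show "residue_ring T A \<subseteq> {(\<lambda>m. 0 + m) ` A, (\<lambda>m. 1 + m) ` A}"
    proof
      fix U assume "U \<in> residue_ring T A"
      then obtain x where x: "x \<in> T" "U = (\<lambda>m. x + m) ` A" unfolding residue_ring_def by blast
      from TF[OF A x(1)] show "U \<in> {(\<lambda>m. 0 + m) ` A, (\<lambda>m. 1 + m) ` A}"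
      proof
        assume "x \<in> A" then have "x - 0 \<in> A" by simp
        then show ?thesis using tr[of x 0] x by simp
      next
        assume "x - 1 \<in> A" then show ?thesis using tr[of x 1] x by simp
      qed
    qed
    have "(\<lambda>m. 0 + m) ` A \<in> residue_ring T A" unfolding residue_ring_def
      by (rule image_eqI[of _ _ 0]) auto
    moreover have "(\<lambda>m. 1 + m) ` A \<in> residue_ring T A" unfolding residue_ring_def
      by (rule image_eqI[of _ _ 1]) auto
    ultimately show "{(\<lambda>m. 0 + m) ` A, (\<lambda>m. 1 + m) ` A} \<subseteq> residue_ring T A" by blast
  qed
  have ne: "(\<lambda>m. 0 + m) ` A \<noteq> (\<lambda>m. 1 + m) ` A"
  proof
    assume "(\<lambda>m. 0 + m) ` A = (\<lambda>m. 1 + m) ` A"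
    then have "0 \<in> (\<lambda>m. 1 + m) ` A" by force
    then obtain m where "m \<in> A" "0 = 1 + m" by blast
    then have "- m = 1" by (metis add.commute add_diff_cancel_right' diff_0)
    moreover have "- m \<in> A" using \<open>m \<in> A\<close> by simp
    ultimately show False using notin_one[OF A] by simp
  qed
  show ?thesis unfolding eq using ne by simp
qed

lemma regular:
  assumes A: "maximal_ideal_in T A"
  shows "regular_ideal_in T A"
proof -
  have "b0 \<in> A" using capR[OF A] b0 MR by blast
  moreover have "nonzerodivisor_in T b0"
    unfolding nonzerodivisor_in_def
  proof (intro conjI ballI impI)
    show "b0 \<in> T" using b0 by auto
    fix y assume "y \<in> T" "b0 * y = 0"
    then have "c0 * (b0 * y) = 0" by simp
    then show "y = 0" using b0c0 by (simp add: mult.assoc[symmetric] mult.commute[of c0])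
  qed
  ultimately show ?thesis unfolding regular_ideal_in_def using maxI[OF A] idl.idl by blast
qed

lemma R_decomp: "R = {a + j | a j. a \<in> prime_subring \<and> j \<in> Jac T}"
proof
  show "R \<subseteq> {a + j | a j. a \<in> prime_subring \<and> j \<in> Jac T}"
  proof
    fix r assume r: "r \<in> R"
    from RF[OF r] show "r \<in> {a + j | a j. a \<in> prime_subring \<and> j \<in> Jac T}"
    proof
      assume "r \<in> M"
      moreover have "r = 0 + r" by simp
      moreover have "(0::'a) \<in> range of_int" by (rule range_eqI[of _ _ 0]) simp
      ultimately show ?thesis unfolding JacT prime_subring_def by blast
    next
      assume "r - 1 \<in> M"
      moreover have "r = 1 + (r - 1)" by simp
      moreover have "(1::'a) \<in> range of_int" by (rule range_eqI[of _ _ 1]) simp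
      ultimately show ?thesis unfolding JacT prime_subring_def by blast
    qed
  qed
  show "{a + j | a j. a \<in> prime_subring \<and> j \<in> Jac T} \<subseteq> R"
    unfolding JacT prime_subring_def by auto
qed

end


lemma bool_comb:
  "\<exists>A B C. ((X1 \<and> Y1) = ((A \<and> X1) \<noteq> ((B \<and> Y1) \<noteq> C))) \<and>
            ((X2 \<and> Y2) = ((A \<and> X2) \<noteq> ((B \<and> Y2) \<noteq> C))) \<and>
            ((X3 \<and> Y3) = ((A \<and> X3) \<noteq> ((B \<and> Y3) \<noteq> C)))"
  by (cases X1; cases X2; cases X3; cases Y1; cases Y2; cases Y3; simp add: ex_bool_eq)

lemma bracket_even:
  assumes "(X \<and> Y) = ((A \<and> X) \<noteq> ((B \<and> Y) \<noteq> C))"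
  shows "(of_bool X * of_bool Y - of_bool A * of_bool X - of_bool B * of_bool Y - of_bool C :: 'a::comm_ring_1) = 0 \<or>
         (of_bool X * of_bool Y - of_bool A * of_bool X - of_bool B * of_bool Y - of_bool C :: 'a) = - 2"
  using assms by (cases X; cases Y; cases A; cases B; cases C; simp)

lemma quad_mod:
  assumes S: "is_subring S" and N: "ideal_in S N" and two: "2 \<in> N"
    and x: "x \<in> S" "x - of_bool X \<in> N" and y: "y \<in> S" "y - of_bool Y \<in> N"
    and c: "(X \<and> Y) = ((A \<and> X) \<noteq> ((B \<and> Y) \<noteq> C))"
  shows "x * y - of_bool A * x - of_bool B * y - of_bool C \<in> N"
proof -
  interpret N: idl S N using S N by unfold_locales
  define u where "u = x - of_bool X"
  define v where "v = y - of_bool Y"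
  define k :: 'a where "k = of_bool X * of_bool Y - of_bool A * of_bool X - of_bool B * of_bool Y - of_bool C"
  have kN: "k \<in> N"
  proof -
    from bracket_even[OF c] have "k = 0 \<or> k = - 2" unfolding k_def .
    then show ?thesis using two N.iuminus by auto
  qed
  have eq: "x * y - of_bool A * x - of_bool B * y - of_bool C = u * y + of_bool X * v - of_bool A * u - of_bool B * v + k"
    unfolding u_def v_def k_def by (simp add: algebra_simps)
  have uv: "u \<in> N" "v \<in> N" using x y u_def v_def by auto
  have ob: "of_bool P \<in> S" for P by (cases P) simp_all
  have "u * y + of_bool X * v - of_bool A * u - of_bool B * v + k \<in> N"
    using uv kN y(1) ob by (blast intro: N.iadd N.idiff N.imultl N.imultr)
  then show ?thesis using eq by metis
qed

lemma tq_nzd: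
  assumes TQ: "is_total_quotient_ring R" and RS: "R \<subseteq> S" and g: "nonzerodivisor_in S g"
    and z: "z * g = 0"
  shows "z = 0"
proof -
  obtain r b where rb: "r \<in> R" "nonzerodivisor_in R b" "z * b = r" using TQ unfolding is_total_quotient_ring_def by blast
  obtain c where c: "b * c = 1" using TQ rb(2) unfolding is_total_quotient_ring_def by blast
  have "r * g = 0" using z rb(3) by (metis mult.commute mult.left_commute mult_zero_right)
  then have "r = 0" using g rb(1) RS unfolding nonzerodivisor_in_def by (auto simp: mult.commute)
  then have "z * b = 0" using rb by simp
  then have "z * b * c = 0" by simp
  then show "z = 0" using c by (simp add: mult.assoc)
qed


locale E2 =
  fixes R S M1 M2 M3 :: "'a::comm_ring_1 set"
  assumes TQ: "is_total_quotient_ring R" and loc: "local_ring R"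
    and Ssub: "is_subring S" and RS: "R \<subseteq> S"
    and M1: "maximal_ideal_in S M1" and M2: "maximal_ideal_in S M2" and M3: "maximal_ideal_in S M3"
    and n12: "M1 \<noteq> M2" and n13: "M1 \<noteq> M3" and n23: "M2 \<noteq> M3"
    and allM: "{M. maximal_ideal_in S M} = {M1, M2, M3}"
    and props: "\<And>M. maximal_ideal_in S M \<Longrightarrow>
          principal_ideal_in S M \<and> regular_ideal_in S M \<and> card (residue_ring S M) = 2"
    and Rdef: "R = {a + j | a j. a \<in> prime_subring \<and> j \<in> Jac S}"
begin

sublocale S: subr S using Ssub by unfold_locales
lemma Rsub: "is_subring R" using loc by (simp add: local_ring_def)
sublocale R: subr R using Rsub by unfold_locales

lemma maxI: "maximal_ideal_in S N \<Longrightarrow> idl S N"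
  using Ssub by unfold_locales (auto simp: maximal_ideal_in_def)

lemma SF:
  assumes A: "maximal_ideal_in S A" and x: "x \<in> S"
  shows "x \<in> A \<or> x - 1 \<in> A"
proof -
  interpret A: idl S A using maxI[OF A] .
  let ?U = "(\<lambda>m. 0 + m) ` A" and ?V = "(\<lambda>m. 1 + m) ` A"
  have U: "?U \<in> residue_ring S A" unfolding residue_ring_def by (rule image_eqI[of _ _ 0]) auto
  have V: "?V \<in> residue_ring S A" unfolding residue_ring_def by (rule image_eqI[of _ _ 1]) auto
  have ne: "?U \<noteq> ?V"
  proof
    assume "?U = ?V"
    then have "0 \<in> ?V" by force
    then obtain m where "m \<in> A" "0 = 1 + m" by blast
    then have "- m = 1" by (metis add.commute add_diff_cancel_right' diff_0)
    moreover have "- m \<in> A" using \<open>m \<in> A\<close> by simp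
    ultimately show False using maximal_one[OF Ssub A] by simp
  qed
  have c2: "card (residue_ring S A) = 2" using props[OF A] by blast
  then obtain P Q where PQ: "residue_ring S A = {P, Q}" "P \<noteq> Q" unfolding card_2_iff by blast
  have all: "residue_ring S A = {?U, ?V}" using U V ne PQ by auto
  have X: "(\<lambda>m. x + m) ` A \<in> residue_ring S A" unfolding residue_ring_def using x by blast
  then have "(\<lambda>m. x + m) ` A = ?U \<or> (\<lambda>m. x + m) ` A = ?V" using all by blast
  moreover have "x \<in> (\<lambda>m. x + m) ` A" by (rule image_eqI[of _ _ 0]) auto
  ultimately have "x \<in> ?U \<or> x \<in> ?V" by auto
  then show ?thesis
  proof
    assume "x \<in> ?U" then show ?thesis by auto
  next
    assume "x \<in> ?V"
    then obtain m where "m \<in> A" "x = 1 + m" by blast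
    then show ?thesis by simp
  qed
qed

lemma one_not: "maximal_ideal_in S A \<Longrightarrow> 1 \<notin> A" using maximal_one[OF Ssub] .

lemma two_in: assumes A: "maximal_ideal_in S A" shows "2 \<in> A"
proof -
  have "(2::'a) \<in> S" by simp
  then have "2 \<in> A \<or> 2 - 1 \<in> A" using SF[OF A] by blast
  then show ?thesis using one_not[OF A] by simp
qed

lemma JacS: "Jac S = M1 \<inter> M2 \<inter> M3"
  unfolding Jac_def allM by auto

lemma J_ideal: "ideal_in S (Jac S)"
proof -
  interpret A: idl S M1 using maxI[OF M1] .
  interpret B: idl S M2 using maxI[OF M2] .
  interpret C: idl S M3 using maxI[OF M3] .
  show ?thesis unfolding JacS
  proof (rule ideal_inI)
    show "M1 \<inter> M2 \<inter> M3 \<subseteq> S" using A.sub by blast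
    show "0 \<in> M1 \<inter> M2 \<inter> M3" by simp
  next
    fix x y assume "x \<in> M1 \<inter> M2 \<inter> M3" "y \<in> M1 \<inter> M2 \<inter> M3"
    then show "x + y \<in> M1 \<inter> M2 \<inter> M3" "x - y \<in> M1 \<inter> M2 \<inter> M3" by simp_all
  next
    fix s x assume "s \<in> S" "x \<in> M1 \<inter> M2 \<inter> M3"
    then show "s * x \<in> M1 \<inter> M2 \<inter> M3" by simp
  qed
qed

sublocale J: idl S "Jac S" using Ssub J_ideal by unfold_locales

lemma of_int_even: "even k \<Longrightarrow> (of_int k :: 'a) \<in> Jac S"
proof -
  assume "even k"
  then obtain l where "k = 2 * l" by blast
  then have "(of_int k :: 'a) = of_int l * 2" by simp
  moreover have "(2::'a) \<in> Jac S" unfolding JacS using two_in M1 M2 M3 by auto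
  ultimately show ?thesis by simp
qed

lemma J_sub_R: "Jac S \<subseteq> R"
proof
  fix j assume "j \<in> Jac S"
  moreover have "(0::'a) \<in> prime_subring" unfolding prime_subring_def by (rule range_eqI[of _ _ 0]) simp
  moreover have "j = 0 + j" by simp
  ultimately show "j \<in> R" unfolding Rdef by blast
qed

lemma J_max_R: "maximal_ideal_in R (Jac S)"
  unfolding maximal_ideal_in_def
proof (intro conjI allI impI)
  show id: "ideal_in R (Jac S)"
  proof (rule ideal_inI)
    show "Jac S \<subseteq> R" using J_sub_R .
  next
    fix s x assume "s \<in> R" "x \<in> Jac S" then show "s * x \<in> Jac S" using RS by auto
  qed auto
  show "Jac S \<noteq> R" using one_not[OF M1] JacS by auto
  fix I assume I: "ideal_in R I \<and> Jac S \<subseteq> I"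
  interpret I: idl R I using I Rsub by unfold_locales auto
  show "I = Jac S \<or> I = R"
  proof (cases "I \<subseteq> Jac S")
    case True then show ?thesis using I by blast
  next
    case False
    then obtain x where x: "x \<in> I" "x \<notin> Jac S" by blast
    have "x \<in> R" using x I.sub by blast
    then obtain a j where aj: "a \<in> prime_subring" "j \<in> Jac S" "x = a + j" unfolding Rdef by blast
    obtain k where k: "a = of_int k" using aj(1) unfolding prime_subring_def by blast
    have "a \<notin> Jac S"
    proof
      assume "a \<in> Jac S" then have "a + j \<in> Jac S" using aj by simp
      then show False using x aj by simp
    qed
    then have "odd k" using of_int_even k by blast
    then have "even (k - 1)" by simp
    then have "(of_int (k - 1) :: 'a) \<in> Jac S" by (rule of_int_even)
    then have a1: "a - 1 \<in> I" using k I by auto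
    have "j \<in> I" using aj I by auto
    then have "x - j - (a - 1) \<in> I" using x a1 by (blast intro: I.idiff)
    then have "1 \<in> I" using aj by simp
    then show ?thesis using I.one_iff by blast
  qed
qed

lemma JacR: "Jac R = Jac S" using local_Jac[OF loc J_max_R] .

lemma gen: assumes A: "maximal_ideal_in S A"
  obtains m where "m \<in> S" "A = {s * m | s. s \<in> S}" "nonzerodivisor_in S m"
proof -
  obtain m where m: "m \<in> S" "A = {s * m | s. s \<in> S}" using props[OF A] unfolding principal_ideal_in_def by blast
  obtain b where b: "b \<in> A" "nonzerodivisor_in S b" using props[OF A] unfolding regular_ideal_in_def by blast
  obtain s where s: "s \<in> S" "b = s * m" using b(1) m(2) by blast
  have "nonzerodivisor_in S m" unfolding nonzerodivisor_in_def
  proof (intro conjI ballI impI)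
    show "m \<in> S" by fact
    fix y assume y: "y \<in> S" "m * y = 0"
    then have "b * y = 0" using s by (simp add: mult.assoc)
    then show "y = 0" using b(2) y(1) unfolding nonzerodivisor_in_def by blast
  qed
  then show ?thesis using that m by blast
qed

lemma notin_other:
  assumes A: "maximal_ideal_in S A" and B: "maximal_ideal_in S B" and ne: "A \<noteq> B"
    and m: "m \<in> S" "A = {s * m | s. s \<in> S}"
  shows "m \<notin> B"
proof
  assume mB: "m \<in> B"
  interpret B: idl S B using maxI[OF B] .
  have "A \<subseteq> B"
  proof
    fix x assume "x \<in> A"
    then obtain s where "s \<in> S" "x = s * m" using m(2) by blast
    then show "x \<in> B" using mB by simp
  qed
  moreover have "ideal_in S B" using B by (simp add: maximal_ideal_in_def)
  ultimately have "B = A \<or> B = S" using A unfolding maximal_ideal_in_def by blast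
  then show False using ne maximal_one[OF Ssub B] by auto
qed

lemma primeS:
  assumes A: "maximal_ideal_in S A" and x: "x \<in> S" "x \<notin> A" and y: "y \<in> S" and xy: "x * y \<in> A"
  shows "y \<in> A"
proof -
  interpret A: idl S A using maxI[OF A] .
  have "x - 1 \<in> A" using SF[OF A x(1)] x(2) by blast
  then have "x * y - (x - 1) * y \<in> A" using xy y by (blast intro: A.idiff A.imultr)
  then show ?thesis by (simp add: algebra_simps)
qed

lemma nzd_mult:
  assumes a: "nonzerodivisor_in S a" and b: "nonzerodivisor_in S b" shows "nonzerodivisor_in S (a * b)"
  unfolding nonzerodivisor_in_def
proof (intro conjI ballI impI)
  have aS: "a \<in> S" and bS: "b \<in> S" using a b by (auto simp: nonzerodivisor_in_def)
  then show "a * b \<in> S" by simp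
  fix y assume y: "y \<in> S" "a * b * y = 0"
  have "a * (b * y) = 0" using y by (simp add: mult.assoc)
  moreover have "b * y \<in> S" using bS y by simp
  ultimately have "b * y = 0" using a unfolding nonzerodivisor_in_def by blast
  then show "y = 0" using b y unfolding nonzerodivisor_in_def by blast
qed

lemma J_principal: obtains g where "g \<in> S" "Jac S = {s * g | s. s \<in> S}" "nonzerodivisor_in S g"
proof -
  obtain m1 where m1: "m1 \<in> S" "M1 = {s * m1 | s. s \<in> S}" "nonzerodivisor_in S m1" using gen[OF M1] by blast
  obtain m2 where m2: "m2 \<in> S" "M2 = {s * m2 | s. s \<in> S}" "nonzerodivisor_in S m2" using gen[OF M2] by blast
  obtain m3 where m3: "m3 \<in> S" "M3 = {s * m3 | s. s \<in> S}" "nonzerodivisor_in S m3" using gen[OF M3] by blast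
  have m1n: "m1 \<notin> M2" "m1 \<notin> M3" using notin_other[OF M1 M2 n12 m1(1,2)] notin_other[OF M1 M3 n13 m1(1,2)] by auto
  have m2n: "m2 \<notin> M3" using notin_other[OF M2 M3 n23 m2(1,2)] by auto
  interpret A: idl S M1 using maxI[OF M1] .
  interpret B: idl S M2 using maxI[OF M2] .
  interpret C: idl S M3 using maxI[OF M3] .
  define g where "g = m3 * m2 * m1"
  have gS: "g \<in> S" unfolding g_def using m1 m2 m3 by simp
  have m12: "m2 * m1 \<notin> M3"
  proof
    assume "m2 * m1 \<in> M3"
    then have "m1 \<in> M3" using primeS[OF M3 m2(1) m2n m1(1)] by simp
    then show False using m1n by simp
  qed
  have "Jac S = {s * g | s. s \<in> S}"
  proof
    show "Jac S \<subseteq> {s * g | s. s \<in> S}"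
    proof
      fix x assume "x \<in> Jac S"
      then have x: "x \<in> M1" "x \<in> M2" "x \<in> M3" unfolding JacS by auto
      obtain s1 where s1: "s1 \<in> S" "x = s1 * m1" using x(1) m1(2) by blast
      have "s1 \<in> M2" using primeS[OF M2 m1(1) m1n(1) s1(1)] x(2) s1(2) by (simp add: mult.commute)
      then obtain s2 where s2: "s2 \<in> S" "s1 = s2 * m2" using m2(2) by blast
      have "(m2 * m1) * s2 \<in> M3" using x(3) s1(2) s2(2) by (simp add: algebra_simps)
      then have "s2 \<in> M3" using primeS[OF M3 _ m12 s2(1)] m1 m2 by simp
      then obtain s3 where s3: "s3 \<in> S" "s2 = s3 * m3" using m3(2) by blast
      have "x = s3 * g" unfolding g_def using s1(2) s2(2) s3(2) by (simp add: algebra_simps)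
      then show "x \<in> {s * g | s. s \<in> S}" using s3(1) by blast
    qed
    show "{s * g | s. s \<in> S} \<subseteq> Jac S"
    proof
      fix y assume "y \<in> {s * g | s. s \<in> S}"
      then obtain s where s: "s \<in> S" "y = s * g" by blast
      have "m1 = 1 * m1" "m2 = 1 * m2" "m3 = 1 * m3" by simp_all
      then have mm: "m1 \<in> M1" "m2 \<in> M2" "m3 \<in> M3" using m1(2) m2(2) m3(2) S.one by blast+
      have ye: "y = (s * m3 * m2) * m1" "y = (s * m3 * m1) * m2" "y = (s * m2 * m1) * m3"
        unfolding s(2) g_def by (simp_all add: algebra_simps)
      have "(s * m3 * m2) * m1 \<in> M1" using mm(1) s(1) m2(1) m3(1) by (intro A.imultl) simp_all
      moreover have "(s * m3 * m1) * m2 \<in> M2" using mm(2) s(1) m1(1) m3(1) by (intro B.imultl) simp_all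
      moreover have "(s * m2 * m1) * m3 \<in> M3" using mm(3) s(1) m1(1) m2(1) by (intro C.imultl) simp_all
      ultimately have "y \<in> M1" "y \<in> M2" "y \<in> M3" using ye by metis+
      then show "y \<in> Jac S" unfolding JacS by blast
    qed
  qed
  moreover have "nonzerodivisor_in S g" unfolding g_def using nzd_mult m1 m2 m3 by blast
  ultimately show ?thesis using that gS by blast
qed

end


context E2
begin

lemma Endo_J: "Endo (Jac S) = S"
proof -
  obtain g where g: "g \<in> S" "Jac S = {s * g | s. s \<in> S}" "nonzerodivisor_in S g" using J_principal by blast
  show ?thesis
  proof
    show "S \<subseteq> Endo (Jac S)" unfolding Endo_def by auto
    show "Endo (Jac S) \<subseteq> S"
    proof
      fix q assume "q \<in> Endo (Jac S)"
      moreover have "g \<in> Jac S" using g by (auto intro!: exI[of _ 1])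
      ultimately have "q * g \<in> Jac S" unfolding Endo_def by blast
      then obtain s where s: "s \<in> S" "q * g = s * g" using g(2) by blast
      have "(q - s) * g = 0" using s by (simp add: algebra_simps)
      then have "q - s = 0" using tq_nzd[OF TQ RS g(3)] by blast
      then show "q \<in> S" using s by simp
    qed
  qed
qed

lemma Rseq_S: "i \<ge> 1 \<Longrightarrow> Rseq R i = S"
proof (induction i)
  case 0 then show ?case by simp
next
  case (Suc i)
  show ?case
  proof (cases i)
    case 0 then show ?thesis using JacR Endo_J by simp
  next
    case (Suc j)
    then have "Rseq R i = S" using Suc.IH by simp
    then show ?thesis using Endo_J by simp
  qed
qed

lemma Rinf_S: "Rinf R = S" using Rinf_const Rseq_S by blast

lemma stableJ: "stable (Jac R)"
proof -
  obtain g where g: "g \<in> S" "Jac S = {s * g | s. s \<in> S}" "nonzerodivisor_in S g" using J_principal by blast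
  have gJ: "g \<in> Jac S" using g by (auto intro!: exI[of _ 1])
  have uniq: "s = s'" if "s \<in> S" "s' \<in> S" "s * g = s' * g" for s s'
  proof -
    have "g * (s - s') = 0" using that by (simp add: algebra_simps)
    moreover have "s - s' \<in> S" using that by simp
    ultimately have "s - s' = 0" using g(3) unfolding nonzerodivisor_in_def by blast
    then show ?thesis by simp
  qed
  define h where "h x = (SOME s. s \<in> S \<and> x = s * g)" for x
  have h: "h x \<in> S \<and> x = h x * g" if "x \<in> Jac S" for x
  proof -
    have "\<exists>s. s \<in> S \<and> x = s * g" using that g(2) by blast
    then show ?thesis unfolding h_def by (rule someI_ex)
  qed
  have hI: "h x = s" if "x \<in> Jac S" "s \<in> S" "x = s * g" for x s
    using uniq h[OF that(1)] that(2,3) by metis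
  define f where "f x y = (if y = g then h x else 0)" for x y
  show ?thesis unfolding stable_def JacR Endo_J projective_over_def
  proof (intro conjI exI[of _ f] ballI)
    fix e x assume "e \<in> S" "x \<in> Jac S" then show "e * x \<in> Jac S" by simp
  next
    fix x y assume "x \<in> Jac S" "y \<in> Jac S" then show "f x y \<in> S" unfolding f_def using h by simp
  next
    fix x assume "x \<in> Jac S"
    have "{y \<in> Jac S. f x y \<noteq> 0} \<subseteq> {g}" unfolding f_def by auto
    then show "finite {y \<in> Jac S. f x y \<noteq> 0}" using finite_subset by blast
  next
    fix x assume x: "x \<in> Jac S"
    show "x = (\<Sum>y\<in>{y \<in> Jac S. f x y \<noteq> 0}. f x y * y)"
    proof (cases "h x = 0")
      case True
      then have "{y \<in> Jac S. f x y \<noteq> 0} = {}" unfolding f_def by auto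
      moreover have "x = 0" using h[OF x] True by simp
      ultimately show ?thesis by simp
    next
      case False
      then have "{y \<in> Jac S. f x y \<noteq> 0} = {g}" unfolding f_def using gJ by auto
      then show ?thesis using h[OF x] unfolding f_def by simp
    qed
  next
    fix x1 x2 y assume xs: "x1 \<in> Jac S" "x2 \<in> Jac S" "y \<in> Jac S"
    have h1: "h x1 \<in> S" "x1 = h x1 * g" using h[OF xs(1)] by auto
    have h2: "h x2 \<in> S" "x2 = h x2 * g" using h[OF xs(2)] by auto
    have e: "x1 + x2 = (h x1 + h x2) * g" using h1(2) h2(2) by (simp add: distrib_right)
    have "x1 + x2 \<in> Jac S" using xs by simp
    moreover have "h x1 + h x2 \<in> S" using h1 h2 by simp
    ultimately have "h (x1 + x2) = h x1 + h x2" using hI e by blast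
    then show "f (x1 + x2) y = f x1 y + f x2 y" unfolding f_def by simp
  next
    fix e x y assume exy: "e \<in> S" "x \<in> Jac S" "y \<in> Jac S"
    have h1: "h x \<in> S" "x = h x * g" using h[OF exy(2)] by auto
    have e: "e * x = (e * h x) * g" using h1(2) by (metis mult.assoc)
    have "e * x \<in> Jac S" using exy by simp
    moreover have "e * h x \<in> S" using h1 exy by simp
    ultimately have "h (e * x) = e * h x" using hI e by blast
    then show "f (e * x) y = e * f x y" unfolding f_def by simp
  qed
qed

lemma quadS: "quadratic_ext R S"
  unfolding quadratic_ext_def
proof (intro conjI RS ballI)
  fix x y assume x: "x \<in> S" and y: "y \<in> S"
  define X where "X i = (x \<notin> i)" for i
  define Y where "Y i = (y \<notin> i)" for i
  have xb: "x - of_bool (X N) \<in> N" if N: "maximal_ideal_in S N" for N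
  proof (cases "x \<in> N")
    case True
    then have "X N = False" unfolding X_def by simp
    then show ?thesis using True by (simp only: of_bool_eq(1) diff_zero)
  next
    case False
    then have "x - 1 \<in> N" using SF[OF N x] by blast
    moreover have "X N = True" unfolding X_def using False by simp
    ultimately show ?thesis by (simp only: of_bool_eq(2))
  qed
  have yb: "y - of_bool (Y N) \<in> N" if N: "maximal_ideal_in S N" for N
  proof (cases "y \<in> N")
    case True
    then have "Y N = False" unfolding Y_def by simp
    then show ?thesis using True by (simp only: of_bool_eq(1) diff_zero)
  next
    case False
    then have "y - 1 \<in> N" using SF[OF N y] by blast
    moreover have "Y N = True" unfolding Y_def using False by simp
    ultimately show ?thesis by (simp only: of_bool_eq(2))
  qed
  from bool_comb[of "X M1" "Y M1" "X M2" "Y M2" "X M3" "Y M3"] obtain A B C where ABC0: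
    "((X M1 \<and> Y M1) = ((A \<and> X M1) \<noteq> ((B \<and> Y M1) \<noteq> C))) \<and>
    ((X M2 \<and> Y M2) = ((A \<and> X M2) \<noteq> ((B \<and> Y M2) \<noteq> C))) \<and>
    ((X M3 \<and> Y M3) = ((A \<and> X M3) \<noteq> ((B \<and> Y M3) \<noteq> C)))" by (elim exE) (rule that)
  note ABC = conjunct1[OF ABC0] conjunct1[OF conjunct2[OF ABC0]] conjunct2[OF conjunct2[OF ABC0]]
  let ?z = "x * y - of_bool A * x - of_bool B * y - of_bool C"
  have id: "ideal_in S M1" "ideal_in S M2" "ideal_in S M3" using M1 M2 M3 by (simp_all add: maximal_ideal_in_def)
  have z: "?z \<in> M1" "?z \<in> M2" "?z \<in> M3"
    using quad_mod[OF Ssub id(1) two_in[OF M1] x xb[OF M1] y yb[OF M1] ABC(1)]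
      quad_mod[OF Ssub id(2) two_in[OF M2] x xb[OF M2] y yb[OF M2] ABC(2)]
      quad_mod[OF Ssub id(3) two_in[OF M3] x xb[OF M3] y yb[OF M3] ABC(3)] by blast+
  then have zJ: "?z \<in> Jac S" unfolding JacS by blast
  have ob: "of_bool P \<in> R" for P by (cases P) simp_all
  have c: "of_bool C + ?z \<in> R" using ob J_sub_R zJ by (blast intro: R.add)
  have "x * y = of_bool A * x + of_bool B * y + (of_bool C + ?z)" by (simp add: algebra_simps)
  then show "\<exists>a\<in>R. \<exists>b\<in>R. \<exists>c\<in>R. x * y = a * x + b * y + c" using ob c by blast
qed

lemma result: "quadratic_ring R \<and> card {M. maximal_ideal_in (Rinf R) M} = 3"
proof
  have "regular_ideal_in R (Jac R)"
  proof -
    obtain g where g: "g \<in> S" "Jac S = {s * g | s. s \<in> S}" "nonzerodivisor_in S g" using J_principal by blast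
    have gJ: "g \<in> Jac S" using g by (auto intro!: exI[of _ 1])
    have "nonzerodivisor_in R g" using g(3) gJ J_sub_R RS unfolding nonzerodivisor_in_def by blast
    then show ?thesis unfolding regular_ideal_in_def JacR using gJ J_max_R by (auto simp: maximal_ideal_in_def)
  qed
  then show "quadratic_ring R" unfolding quadratic_ring_def using loc stableJ quadS Rinf_S by simp
  show "card {M. maximal_ideal_in (Rinf R) M} = 3" unfolding Rinf_S allM using n12 n13 n23 by simp
qed

end


theorem theorem3p13:
  fixes R :: "'a::comm_ring_1 set"
  assumes "is_total_quotient_ring R"
    and "local_ring R"
    and "regular_ideal_in R (Jac R)"
  shows "(quadratic_ring R \<and> card {M. maximal_ideal_in (Rinf R) M} = 3) \<longleftrightarrow>
    (\<exists>S. is_subring S \<and> R \<subseteq> S \<and>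
       card {M. maximal_ideal_in S M} = 3 \<and>
       (\<forall>M. maximal_ideal_in S M \<longrightarrow>
          principal_ideal_in S M \<and> regular_ideal_in S M \<and> card (residue_ring S M) = 2) \<and>
       R = {a + j | a j. a \<in> prime_subring \<and> j \<in> Jac S})"
proof -
  note TQ = assms(1) and loc = assms(2) and reg = assms(3)
  have Rsub: "is_subring R" using loc by (simp add: local_ring_def)
  obtain M where Mmax: "maximal_ideal_in R M" using loc unfolding local_ring_def by blast
  have JacR: "Jac R = M" using local_Jac[OF loc Mmax] .
  show ?thesis
  proof
    assume H: "quadratic_ring R \<and> card {M. maximal_ideal_in (Rinf R) M} = 3"
    define T where "T = Rinf R"
    have Tsub: "is_subring T" unfolding T_def using Rinf_subring[OF Rsub] .
    have RT: "R \<subseteq> T" unfolding T_def using R_sub_Rinf[OF Rsub] .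
    have qe: "quadratic_ext R T" using H unfolding quadratic_ring_def T_def by blast
    have quad: "\<And>x y. x \<in> T \<Longrightarrow> y \<in> T \<Longrightarrow> \<exists>a\<in>R. \<exists>b\<in>R. \<exists>c\<in>R. x * y = a * x + b * y + c"
      using qe unfolding quadratic_ext_def by blast
    have "card {M. maximal_ideal_in T M} = 3" using H unfolding T_def by blast
    then obtain N1 N2 N3 where N: "{M. maximal_ideal_in T M} = {N1, N2, N3}" "N1 \<noteq> N2" "N2 \<noteq> N3" "N1 \<noteq> N3"
      unfolding card_3_iff by blast
    have Nmax: "maximal_ideal_in T N1" "maximal_ideal_in T N2" "maximal_ideal_in T N3" using N(1) by blast+
    have allN: "\<And>N'. maximal_ideal_in T N' \<Longrightarrow> N' = N1 \<or> N' = N2 \<or> N' = N3" using N(1) by blast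
    have "stable M" using H JacR unfolding quadratic_ring_def by simp
    then obtain f where f:
        "\<forall>x\<in>M. \<forall>y\<in>M. f x y \<in> Endo M"
        "\<forall>x\<in>M. finite {y\<in>M. f x y \<noteq> 0}"
        "\<forall>x\<in>M. x = (\<Sum>y\<in>{y\<in>M. f x y \<noteq> 0}. f x y * y)"
        "\<forall>x1\<in>M. \<forall>x2\<in>M. \<forall>y\<in>M. f (x1 + x2) y = f x1 y + f x2 y"
        "\<forall>e\<in>Endo M. \<forall>x\<in>M. \<forall>y\<in>M. f (e * x) y = e * f x y"
      unfolding stable_def projective_over_def by blast
    obtain b0 where b0: "b0 \<in> M" "nonzerodivisor_in R b0" using reg JacR unfolding regular_ideal_in_def by blast
    obtain c0 where c0: "b0 * c0 = 1" using TQ b0(2) unfolding is_total_quotient_ring_def by blast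
    have R1: "Rseq R 1 = Endo M" using JacR by simp
    have R1T: "Endo M \<subseteq> T" unfolding T_def Rinf_def using R1[symmetric] by auto
    interpret D4 R M T N1 N2 N3 f b0 c0
    proof (unfold_locales)
      show "local_ring R" by fact
      show "maximal_ideal_in R M" by fact
      show "is_subring T" by fact
      show "R \<subseteq> T" by fact
      show "\<And>x y. x \<in> T \<Longrightarrow> y \<in> T \<Longrightarrow> \<exists>a\<in>R. \<exists>b\<in>R. \<exists>c\<in>R. x * y = a * x + b * y + c" by (rule quad)
      show "maximal_ideal_in T N1" "maximal_ideal_in T N2" "maximal_ideal_in T N3" by (fact Nmax)+
      show "N1 \<noteq> N2" "N1 \<noteq> N3" "N2 \<noteq> N3" using N by auto
      show "\<And>N. maximal_ideal_in T N \<Longrightarrow> N = N1 \<or> N = N2 \<or> N = N3" by (rule allN)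
      show "Endo M \<subseteq> T" by fact
    qed (use f b0 c0 in auto)
    have seq: "Rseq R i = Endo M" if "i \<ge> 1" for i
      using that
    proof (induction i)
      case 0 then show ?case by simp
    next
      case (Suc i)
      show ?case
      proof (cases i)
        case 0 then show ?thesis using R1 by simp
      next
        case (Suc j)
        then have "Rseq R i = Endo M" using Suc.IH by simp
        then show ?thesis using JacR1 by simp
      qed
    qed
    have Teq: "Endo M = T" unfolding T_def using Rinf_const[OF seq] by simp
    interpret D5 R M T N1 N2 N3 f b0 c0 by unfold_locales (fact Teq)
    have allP: "principal_ideal_in T P \<and> regular_ideal_in T P \<and> card (residue_ring T P) = 2"
      if P: "maximal_ideal_in T P" for P
    proof -
      obtain B C where BC: "maximal_ideal_in T B" "maximal_ideal_in T C" "P \<noteq> B" "P \<noteq> C" "B \<noteq> C"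
        using others[OF P] by blast
      show ?thesis using princ[OF P BC] regular[OF P] residue2[OF P] by blast
    qed
    show "\<exists>S. is_subring S \<and> R \<subseteq> S \<and>
       card {M. maximal_ideal_in S M} = 3 \<and>
       (\<forall>M. maximal_ideal_in S M \<longrightarrow>
          principal_ideal_in S M \<and> regular_ideal_in S M \<and> card (residue_ring S M) = 2) \<and>
       R = {a + j | a j. a \<in> prime_subring \<and> j \<in> Jac S}"
      using Tsub RT \<open>card {M. maximal_ideal_in T M} = 3\<close> allP R_decomp by blast
  next
    assume "\<exists>S. is_subring S \<and> R \<subseteq> S \<and>
       card {M. maximal_ideal_in S M} = 3 \<and>
       (\<forall>M. maximal_ideal_in S M \<longrightarrow>
          principal_ideal_in S M \<and> regular_ideal_in S M \<and> card (residue_ring S M) = 2) \<and>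
       R = {a + j | a j. a \<in> prime_subring \<and> j \<in> Jac S}"
    then obtain S where S: "is_subring S" "R \<subseteq> S" "card {M. maximal_ideal_in S M} = 3"
      "\<And>M. maximal_ideal_in S M \<Longrightarrow> principal_ideal_in S M \<and> regular_ideal_in S M \<and> card (residue_ring S M) = 2"
      "R = {a + j | a j. a \<in> prime_subring \<and> j \<in> Jac S}" by blast
    obtain M1 M2 M3 where Ms: "{M. maximal_ideal_in S M} = {M1, M2, M3}" "M1 \<noteq> M2" "M2 \<noteq> M3" "M1 \<noteq> M3"
      using S(3) unfolding card_3_iff by blast
    interpret E2 R S M1 M2 M3
    proof (unfold_locales)
      show "maximal_ideal_in S M1" "maximal_ideal_in S M2" "maximal_ideal_in S M3" using Ms(1) by blast+
    qed (use TQ loc S Ms in auto)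
    show "quadratic_ring R \<and> card {M. maximal_ideal_in (Rinf R) M} = 3" by (rule result)
  qed
qed


end
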